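(* For every $n\ge 1$ and every unlabeled binary tree $T\in\mathrm{URL}_n$, \[ \sum_{\sigma \in \mathrm{And}^{I}(T)} s^{\mathrm{ides}(\sigma)} =\sum_{\sigma \in \mathrm{And}^{II}(T)} s^{\mathrm{ides}(\sigma)} =\sum_{\sigma \in \mathrm{RS}(T)} s^{\mathrm{ides}(\sigma)}. \]
   Context: A binary tree is a rooted tree in which every vertex has no child, a single left child, a single right child, or both. The map $\Psi$ sends a word $\pi$ of distinct integers to an increasing binary tree: $\Psi(\emptyset)=\emptyset$; otherwise write $\pi=\sigma\, i\,\tau$ with $i$ the least letter, and let $\Psi(\pi)$ have root $i$, left subtree $\Psi(\sigma)$, right subtree $\Psi(\tau)$. The shape of a labeled tree is its underlying unlabeled binary tree. $\mathrm{URL}_n$ is the set of unlabeled rooted binary trees with $n$ vertices in which no vertex has a left child but no right child. Andr\'e permutations: the empty word and one-letter words are Andr\'e I and Andr\'e II; a word $\sigma$ of $n\ge2$ distinct integers, written $\sigma=\tau\,\min(\sigma)\,\tau'$, is Andr\'e I (resp. II) if $\tau,\tau'$ are Andr\'e I (resp. II) and the largest (resp. smallest) letter of $\tau\tau'$ lies in $\tau'$. A permutation $\sigma$ of $[n]$ is simsun if $\sigma_n=n$ and for each $k\in[n]$ the subword formed by the letters $1,\dots,k$ has no index $i$ with $w_i>w_{i+1}>w_{i+2}$. For $T\in\mathrm{URL}_n$, $\mathrm{And}^{I}(T)$, $\mathrm{And}^{II}(T)$, $\mathrm{RS}(T)$ denote the sets of Andr\'e I, Andr\'e II, and simsun permutations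 $\sigma$ of $[n]$ respectively with $\mathrm{shape}(\Psi(\sigma))=T$. $\mathrm{ides}(\sigma)$ is the number of descents of $\sigma^{-1}$, i.e. the number of $i\in[n-1]$ such that $i+1$ appears to the left of $i$ in $\sigma$. *)

theory Defs
  imports Main "HOL-Library.Tree"
begin

definition wleft :: "nat list \<Rightarrow> nat list" where
  "wleft w = takeWhile (\<lambda>x. x \<noteq> Min (set w)) w"

definition wright :: "nat list \<Rightarrow> nat list" where
  "wright w = tl (dropWhile (\<lambda>x. x \<noteq> Min (set w)) w)"

lemma dw_ne: "w \<noteq> [] \<Longrightarrow> dropWhile (\<lambda>x. x \<noteq> Min (set w)) w \<noteq> []"
  by (simp add: dropWhile_eq_Nil_conv)

lemma wleft_len: "w \<noteq> [] \<Longrightarrow> length (wleft w) < length w"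
proof -
  assume ne: "w \<noteq> []"
  have "length w = length (takeWhile (\<lambda>x. x \<noteq> Min (set w)) w)
      + length (dropWhile (\<lambda>x. x \<noteq> Min (set w)) w)"
    by (metis length_append takeWhile_dropWhile_id)
  then show ?thesis using dw_ne[OF ne] unfolding wleft_def by simp
qed

lemma wright_len: "w \<noteq> [] \<Longrightarrow> length (wright w) < length w"
proof -
  assume ne: "w \<noteq> []"
  have "length (dropWhile (\<lambda>x. x \<noteq> Min (set w)) w) \<le> length w"
    by (rule length_dropWhile_le)
  then show ?thesis using dw_ne[OF ne] unfolding wright_def by (cases w) auto
qed

function Psi :: "nat list \<Rightarrow> nat tree" where
  "Psi w = (if w = [] then Leaf
            else Node (Psi (wleft w)) (Min (set w)) (Psi (wright w)))"
  by auto
termination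
  by (relation "measure length") (auto intro!: wleft_len wright_len)

declare Psi.simps[simp del]

definition shape :: "'a tree \<Rightarrow> unit tree" where
  "shape t = map_tree (\<lambda>_. ()) t"

fun no_left_only :: "unit tree \<Rightarrow> bool" where
  "no_left_only Leaf = True"
| "no_left_only (Node l _ r) =
     (no_left_only l \<and> no_left_only r \<and> (l \<noteq> Leaf \<longrightarrow> r \<noteq> Leaf))"

definition URL :: "nat \<Rightarrow> unit tree set" where
  "URL n = {T. size T = n \<and> no_left_only T}"

function andreI :: "nat list \<Rightarrow> bool" where
  "andreI w = (if length w \<le> 1 then True
     else andreI (wleft w) \<and> andreI (wright w)
          \<and> Max (set (wleft w @ wright w)) \<in> set (wright w))"
  by auto
termination
  by (relation "measure length") (auto intro!: wleft_len wright_len)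

function andreII :: "nat list \<Rightarrow> bool" where
  "andreII w = (if length w \<le> 1 then True
     else andreII (wleft w) \<and> andreII (wright w)
          \<and> Min (set (wleft w @ wright w)) \<in> set (wright w))"
  by auto
termination
  by (relation "measure length") (auto intro!: wleft_len wright_len)

declare andreI.simps[simp del] andreII.simps[simp del]

definition perms :: "nat \<Rightarrow> nat list set" where
  "perms n = {w. distinct w \<and> set w = {1..n}}"

definition no_double_descent :: "nat list \<Rightarrow> bool" where
  "no_double_descent w =
     (\<not> (\<exists>i. i + 2 < length w \<and> w ! i > w ! (i+1) \<and> w ! (i+1) > w ! (i+2)))"

definition simsun :: "nat \<Rightarrow> nat list \<Rightarrow> bool" where
  "simsun n w = (w \<in> perms n \<and> w ! (n - 1) = n \<and>
     (\<forall>k\<in>{1..n}. no_double_descent (filter (\<lambda>x. x \<le> k) w)))"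

definition pos :: "nat list \<Rightarrow> nat \<Rightarrow> nat" where
  "pos w x = (LEAST i. i < length w \<and> w ! i = x)"

definition ides :: "nat \<Rightarrow> nat list \<Rightarrow> nat" where
  "ides n w = card {i \<in> {1..<n}. pos w (i+1) < pos w i}"

definition AndI :: "nat \<Rightarrow> unit tree \<Rightarrow> nat list set" where
  "AndI n T = {w \<in> perms n. andreI w \<and> shape (Psi w) = T}"

definition AndII :: "nat \<Rightarrow> unit tree \<Rightarrow> nat list set" where
  "AndII n T = {w \<in> perms n. andreII w \<and> shape (Psi w) = T}"

definition RS :: "nat \<Rightarrow> unit tree \<Rightarrow> nat list set" where
  "RS n T = {w \<in> perms n. simsun n w \<and> shape (Psi w) = T}"

end

theory Submission
  imports Defs "HOL-Library.Multiset"
begin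


fun mrg :: "bool list \<Rightarrow> 'a list \<Rightarrow> 'a list \<Rightarrow> 'a list" where
  "mrg [] xs ys = []"
| "mrg (b # P) xs ys = (if b then hd xs # mrg P (tl xs) ys else hd ys # mrg P xs (tl ys))"

fun W :: "('a \<Rightarrow> 'a \<Rightarrow> bool) \<Rightarrow> 'a list \<Rightarrow> nat" where
  "W c (x # y # xs) = (if c x y then 1 else 0) + W c (y # xs)"
| "W c _ = 0"

fun cw :: "bool list \<Rightarrow> bool list \<Rightarrow> nat + nat \<Rightarrow> nat + nat \<Rightarrow> bool" where
  "cw du dv (Inl i) (Inl j) = du ! i"
| "cw du dv (Inr i) (Inr j) = dv ! i"
| "cw du dv (Inr i) (Inl j) = True"
| "cw du dv (Inl i) (Inr j) = False"

definition M :: "bool list \<Rightarrow> nat \<Rightarrow> nat \<Rightarrow> (nat + nat) list" where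
  "M P a b = mrg P (map Inl [0..<a]) (map Inr [0..<b])"

definition pats :: "nat \<Rightarrow> nat \<Rightarrow> bool list set" where
  "pats a b = {P. length P = a + b \<and> count_list P True = a}"

lemma count_TF: "count_list P True + count_list P False = length P"
  by (induction P) auto

lemma finite_pats: "finite (pats a b)"
proof -
  have "pats a b \<subseteq> {P. set P \<subseteq> UNIV \<and> length P = a + b}" unfolding pats_def by auto
  thus ?thesis using finite_lists_length_eq[of "UNIV::bool set"] finite_subset by auto
qed

lemma W_Cons: "W c (x # xs) = (if xs \<noteq> [] \<and> c x (hd xs) then 1 else 0) + W c xs"
  by (cases xs) auto

lemma W_app: "W c (xs @ ys) = W c xs + W c ys +
   (if xs \<noteq> [] \<and> ys \<noteq> [] \<and> c (last xs) (hd ys) then 1 else 0)"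
  by (induction xs) (auto simp: W_Cons)

lemma W_cong: "(\<And>x y. x \<in> set xs \<Longrightarrow> c x y = c' x y) \<Longrightarrow> W c xs = W c' xs"
  by (induction xs) (auto simp: W_Cons)

lemma mrg_set: "count_list P True = length xs \<Longrightarrow> count_list P False = length ys \<Longrightarrow>
   set (mrg P xs ys) = set xs \<union> set ys"
proof (induction P arbitrary: xs ys)
  case Nil thus ?case by auto
next
  case (Cons b P)
  show ?case
  proof (cases b)
    case True
    then obtain x xs' where "xs = x # xs'" using Cons.prems by (cases xs) auto
    thus ?thesis using Cons True by auto
  next
    case False
    then obtain y ys' where "ys = y # ys'" using Cons.prems by (cases ys) auto
    thus ?thesis using Cons False by auto
  qed
qed

lemma mrg_length: "length (mrg P xs ys) = length P"
  by (induction P arbitrary: xs ys) auto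

lemma mrg_repF: "p \<le> length ys \<Longrightarrow> mrg (replicate p False @ P) xs ys = take p ys @ mrg P xs (drop p ys)"
proof (induction p arbitrary: ys)
  case 0 thus ?case by simp
next
  case (Suc p)
  then obtain y ys' where "ys = y # ys'" by (cases ys) auto
  thus ?case using Suc by auto
qed

lemma mrg_T: "mrg (True # P) (x # xs) ys = x # mrg P xs ys" by simp
lemma mrg_F: "mrg (False # P) xs (y # ys) = y # mrg P xs ys" by simp


definition psi :: "bool list \<Rightarrow> bool list" where
  "psi Q = (let p = length (takeWhile Not Q); Q1 = dropWhile Not Q in
     if p > 0 \<and> take 2 Q1 = [True, True] then True # replicate p False @ True # drop 2 Q1
     else if p = 0 \<and> Q \<noteq> [] then
       (let Q2 = tl Q; q = length (takeWhile Not Q2); Q3 = dropWhile Not Q2 in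
        if q > 0 \<and> Q3 \<noteq> [] then replicate q False @ True # True # tl Q3 else Q)
     else Q)"

lemma tw_rep: "takeWhile Not (replicate p False @ True # Y) = replicate p False"
  by (induction p) auto
lemma dw_rep: "dropWhile Not (replicate p False @ True # Y) = True # Y"
  by (induction p) auto

lemma psi_1: "p > 0 \<Longrightarrow> psi (replicate p False @ True # True # Y) = True # replicate p False @ True # Y"
  unfolding psi_def Let_def by (simp add: tw_rep dw_rep)

lemma psi_2: "q > 0 \<Longrightarrow> psi (True # replicate q False @ True # Y) = replicate q False @ True # True # Y"
  unfolding psi_def Let_def by (simp add: tw_rep dw_rep)

lemma psi_3: "psi (True # True # Y) = True # True # Y"
  unfolding psi_def Let_def by simp

lemma psi_4: "p > 0 \<Longrightarrow> q > 0 \<Longrightarrow>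
   psi (replicate p False @ True # replicate q False @ True # Y) = replicate p False @ True # replicate q False @ True # Y"
  unfolding psi_def Let_def by (cases q) (simp_all add: tw_rep dw_rep)

lemma first_true: "True \<in> set Q \<Longrightarrow> \<exists>p R. Q = replicate p False @ True # R"
proof (induction Q)
  case Nil thus ?case by simp
next
  case (Cons b Q)
  show ?case
  proof (cases b)
    case True thus ?thesis by (intro exI[of _ 0]) auto
  next
    case False
    then obtain p R where "Q = replicate p False @ True # R" using Cons by auto
    thus ?thesis using False by (intro exI[of _ "Suc p"]) auto
  qed
qed

lemma two_true: "count_list Q True \<ge> 2 \<Longrightarrow> \<exists>p q Y. Q = replicate p False @ True # replicate q False @ True # Y"
proof -
  assume a: "count_list Q True \<ge> 2"
  hence "True \<in> set Q" by (metis count_notin not_numeral_le_zero)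
  then obtain p R where Q: "Q = replicate p False @ True # R" using first_true by blast
  have "count_list R True \<ge> 1" using a Q by simp
  hence "True \<in> set R" by (metis count_notin not_one_le_zero)
  then obtain q Y where "R = replicate q False @ True # Y" using first_true by blast
  thus ?thesis using Q by blast
qed

lemma count_rep_F: "count_list (replicate p False) True = 0" by (induction p) auto
lemma count_rep_F2: "count_list (replicate p False) False = p" by (induction p) auto

lemma psi_cases:
  assumes "count_list Q True \<ge> 2"
  obtains p Y where "p > 0" "Q = replicate p False @ True # True # Y" "psi Q = True # replicate p False @ True # Y"
  | q Y where "q > 0" "Q = True # replicate q False @ True # Y" "psi Q = replicate q False @ True # True # Y"
  | "psi Q = Q"
proof -
  obtain p q Y where Q: "Q = replicate p False @ True # replicate q False @ True # Y"
    using two_true[OF assms] by blast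
  show ?thesis
  proof (cases "p = 0")
    case True
    show ?thesis
    proof (cases "q = 0")
      case True thus ?thesis using \<open>p = 0\<close> Q psi_3 that by simp
    next
      case False thus ?thesis using \<open>p = 0\<close> Q psi_2 that by simp
    qed
  next
    case False
    show ?thesis
    proof (cases "q = 0")
      case True thus ?thesis using False Q psi_1 that by simp
    next
      case qF: False thus ?thesis using False Q psi_4 that by simp
    qed
  qed
qed

lemma psi_props:
  assumes "count_list Q True \<ge> 2"
  shows "length (psi Q) = length Q" "count_list (psi Q) True = count_list Q True"
    "count_list (psi Q) False = count_list Q False" "psi (psi Q) = Q" "last (psi Q) = last Q"
    "hd (psi Q) = hd Q \<or> True"
  using assms
  by (cases rule: psi_cases[OF assms]; simp add: psi_1 psi_2 count_rep_F count_rep_F2)+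

fun phi :: "nat \<Rightarrow> bool list \<Rightarrow> bool list" where
  "phi i [] = []"
| "phi i (False # P) = False # phi i P"
| "phi 0 (True # P) = True # psi P"
| "phi (Suc i) (True # P) = True # phi i P"

lemma phi_props:
  "count_list P True \<ge> i + 3 \<Longrightarrow>
   length (phi i P) = length P \<and> count_list (phi i P) True = count_list P True \<and>
   count_list (phi i P) False = count_list P False \<and> phi i (phi i P) = P \<and>
   last (phi i P) = last P \<and> (P \<noteq> [] \<longrightarrow> hd (phi i P) = hd P) \<and> phi i P \<noteq> []"
proof (induction i P rule: phi.induct)
  case (1 i) thus ?case by simp
next
  case (2 i P)
  have "P \<noteq> []" using 2 by (cases P) auto
  thus ?case using 2 by auto
next
  case (3 P)
  hence c: "count_list P True \<ge> 2" by simp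
  hence "P \<noteq> []" by (cases P) auto
  moreover have "psi P \<noteq> []" using psi_props(1)[OF c] \<open>P \<noteq> []\<close> by auto
  ultimately show ?case using psi_props[OF c] by auto
next
  case (4 i P)
  hence "P \<noteq> []" by (cases P) auto
  thus ?case using 4 by auto
qed


definition swp :: "nat \<Rightarrow> bool list \<Rightarrow> bool list" where
  "swp k du = du[k := du ! Suc k, Suc k := du ! k]"

lemma cw_swp_other: "x \<noteq> Inl k \<Longrightarrow> x \<noteq> Inl (Suc k) \<Longrightarrow> cw (swp k du) dv x y = cw du dv x y"
  unfolding swp_def by (cases x; cases y) (auto simp: nth_list_update)

lemma W_swp_other: "Inl k \<notin> set xs \<Longrightarrow> Inl (Suc k) \<notin> set xs \<Longrightarrow> W (cw (swp k du) dv) xs = W (cw du dv) xs"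
  by (rule W_cong) (metis cw_swp_other)

lemma swp_nth: "Suc k < length du \<Longrightarrow> swp k du ! k = du ! Suc k \<and> swp k du ! Suc k = du ! k"
  unfolding swp_def by (auto simp: nth_list_update)

lemma W_app2: "xs \<noteq> [] \<Longrightarrow> W c (xs @ b # ys) = W c xs +
   (if c (last xs) b then 1 else 0) + W c (b # ys)"
  by (simp add: W_app)

lemma W_app3: "xs \<noteq> [] \<Longrightarrow> W c (a # xs @ b # ys) = (if c a (hd xs) then 1 else 0) + W c xs +
   (if c (last xs) b then 1 else 0) + W c (b # ys)"
  by (simp add: W_Cons W_app)

lemma hl_take_map: "0 < p \<Longrightarrow> p \<le> length vs \<Longrightarrow>
  hd (take p (map f vs)) = f (vs!0) \<and> last (take p (map f vs)) = f (vs!(p-1))"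
proof -
  assume a: "0 < p" "p \<le> length vs"
  hence ne: "take p (map f vs) \<noteq> []" by auto
  have "vs \<noteq> []" using a by (cases vs) auto
  thus ?thesis using a by (simp add: hd_conv_nth[OF ne] last_conv_nth[OF ne] nth_map)
qed

lemma hl_take_drop_map: "0 < q \<Longrightarrow> p + q \<le> length vs \<Longrightarrow>
  hd (take q (drop p (map f vs))) = f (vs!p) \<and> last (take q (drop p (map f vs))) = f (vs!(p+q-1))"
  by (simp add: hd_conv_nth last_conv_nth)

lemma psi_weight:
  fixes rest vs :: "nat list"
  assumes cT: "count_list Q True = Suc (length rest)" and rne: "rest \<noteq> []" and cF: "count_list Q False = length vs"
    and k: "Suc k < length du" and nr: "k \<notin> set rest" "Suc k \<notin> set rest"
  shows "W (cw du dv) (mrg (True # psi Q) (map Inl (k # Suc k # rest)) (map Inr vs)) =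
         W (cw (swp k du) dv) (mrg (True # Q) (map Inl (k # Suc k # rest)) (map Inr vs))"
proof -
  have c2: "count_list Q True \<ge> 2" using cT rne by (cases rest) auto
  let ?c1 = "cw du dv" and ?c2 = "cw (swp k du) dv"
  have sw: "swp k du ! k = du ! Suc k" "swp k du ! Suc k = du ! k" using swp_nth[OF k] by auto
  show ?thesis
  proof (cases rule: psi_cases[OF c2])
    case (1 p Y)
    have pl: "p \<le> length vs" using 1 cF by (simp add: count_rep_F2)
    define Vp :: "(nat + nat) list" where "Vp = take p (map Inr vs)"
    obtain r0 rest' where rs: "rest = r0 # rest'" using rne by (cases rest) (auto simp: count_rep_F)
    define R where "R = mrg Y (map Inl rest') (drop p (map Inr vs))"
    have Vne: "Vp \<noteq> []" using 1 pl by (auto simp: Vp_def)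
    have hV: "hd Vp = Inr (vs ! 0)" "last Vp = Inr (vs ! (p - 1))" using 1 pl
      using hl_take_map[of p vs Inr] hl_take_map[of q vs Inr] by (auto simp: Vp_def)
    have sV: "set Vp \<subseteq> range Inr" by (auto simp: Vp_def take_map)
    have cY: "count_list Y True = length (map Inl rest')" "count_list Y False = length (drop p (map Inr vs))"
      using 1 cT cF rs by (auto simp: count_rep_F count_rep_F2)
    have sR: "set R \<subseteq> Inl ` set rest' \<union> range Inr" unfolding R_def using mrg_set[OF cY] by (auto simp: drop_map)
    have w1: "mrg (True # psi Q) (map Inl (k # Suc k # rest)) (map Inr vs) = Inl k # [] @ Inl (Suc k) # Vp @ Inl r0 # R"
      using 1 pl rs by (simp add: mrg_repF Vp_def R_def)
    have w2: "mrg (True # Q) (map Inl (k # Suc k # rest)) (map Inr vs) = Inl k # Vp @ Inl (Suc k) # Inl r0 # R"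
      using 1 pl rs by (simp add: mrg_repF Vp_def R_def)
    have e1: "W ?c1 Vp = W ?c2 Vp" using sV by (intro W_swp_other[symmetric]) auto
    have e2: "W ?c1 (Inl r0 # R) = W ?c2 (Inl r0 # R)" using sR nr rs by (intro W_swp_other[symmetric]) auto
    show ?thesis unfolding w1 w2 using Vne hV e1 e2 sw
      by (simp add: W_app3 W_app2)
  next
    case (2 q Y)
    have pl: "q \<le> length vs" using 2 cF by (simp add: count_rep_F2)
    define Vp :: "(nat + nat) list" where "Vp = take q (map Inr vs)"
    obtain r0 rest' where rs: "rest = r0 # rest'" using rne by (cases rest) (auto simp: count_rep_F)
    define R where "R = mrg Y (map Inl rest') (drop q (map Inr vs))"
    have Vne: "Vp \<noteq> []" using 2 pl by (auto simp: Vp_def)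
    have hV: "hd Vp = Inr (vs ! 0)" "last Vp = Inr (vs ! (q - 1))" using 2 pl
      using hl_take_map[of p vs Inr] hl_take_map[of q vs Inr] by (auto simp: Vp_def)
    have sV: "set Vp \<subseteq> range Inr" by (auto simp: Vp_def take_map)
    have cY: "count_list Y True = length (map Inl rest')" "count_list Y False = length (drop q (map Inr vs))"
      using 2 cT cF rs by (auto simp: count_rep_F count_rep_F2)
    have sR: "set R \<subseteq> Inl ` set rest' \<union> range Inr" unfolding R_def using mrg_set[OF cY] by (auto simp: drop_map)
    have w1: "mrg (True # psi Q) (map Inl (k # Suc k # rest)) (map Inr vs) = Inl k # Vp @ Inl (Suc k) # Inl r0 # R"
      using 2 pl rs by (simp add: mrg_repF Vp_def R_def)
    have w2: "mrg (True # Q) (map Inl (k # Suc k # rest)) (map Inr vs) = Inl k # [] @ Inl (Suc k) # Vp @ Inl r0 # R"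
      using 2 pl rs by (simp add: mrg_repF Vp_def R_def)
    have e1: "W ?c1 Vp = W ?c2 Vp" using sV by (intro W_swp_other[symmetric]) auto
    have e2: "W ?c1 (Inl r0 # R) = W ?c2 (Inl r0 # R)" using sR nr rs by (intro W_swp_other[symmetric]) auto
    show ?thesis unfolding w1 w2 using Vne hV e1 e2 sw
      by (simp add: W_app3 W_app2)
  next
    case 3
    obtain p q Y where Q: "Q = replicate p False @ True # replicate q False @ True # Y"
      using two_true[OF c2] by blast
    show ?thesis
    proof (cases "p = 0 \<and> q = 0")
      case True
      obtain r0 rest' where rs: "rest = r0 # rest'" using rne by (cases rest) (auto simp: count_rep_F)
      define R where "R = mrg Y (map Inl rest') (map Inr vs)"
      have cY: "count_list Y True = length (map Inl rest')" "count_list Y False = length (map Inr vs)"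
        using Q True cT cF rs by (auto simp: count_rep_F count_rep_F2)
      have sR: "set R \<subseteq> Inl ` set rest' \<union> range Inr" unfolding R_def using mrg_set[OF cY] by auto
      have w: "mrg (True # Q) (map Inl (k # Suc k # rest)) (map Inr vs) = Inl k # Inl (Suc k) # Inl r0 # R"
        using Q True rs by (simp add: R_def)
      have e2: "W ?c1 (Inl r0 # R) = W ?c2 (Inl r0 # R)" using sR nr rs by (intro W_swp_other[symmetric]) auto
      show ?thesis unfolding 3 w using e2 sw by simp
    next
      case False
      have pq: "p > 0" "q > 0"
      proof -
        show "p > 0"
        proof (rule ccontr)
          assume "\<not> p > 0" hence "p = 0" by simp
          hence "q > 0" using False by simp
          hence "psi Q = replicate q False @ True # True # Y" using Q \<open>p = 0\<close> psi_2 by simp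
          hence "psi Q \<noteq> Q" using Q \<open>p = 0\<close> \<open>q > 0\<close> by (cases q) auto
          thus False using 3 by simp
        qed
        show "q > 0"
        proof (rule ccontr)
          assume "\<not> q > 0" hence "q = 0" by simp
          hence "psi Q = True # replicate p False @ True # Y" using Q \<open>p > 0\<close> psi_1 by simp
          hence "psi Q \<noteq> Q" using Q \<open>p > 0\<close> by (cases p) auto
          thus False using 3 by simp
        qed
      qed
      have pl: "p + q \<le> length vs" using Q cF by (simp add: count_rep_F2)
      define Vp :: "(nat + nat) list" where "Vp = take p (map Inr vs)"
      define Vq :: "(nat + nat) list" where "Vq = take q (drop p (map Inr vs))"
      obtain r0 rest' where rs: "rest = r0 # rest'" using rne by (cases rest) (auto simp: count_rep_F)
      define R where "R = mrg Y (map Inl rest') (drop q (drop p (map Inr vs)))"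
      have Vne: "Vp \<noteq> []" "Vq \<noteq> []" using pq pl by (auto simp: Vp_def Vq_def)
      have hV: "hd Vp = Inr (vs ! 0)" "last Vp = Inr (vs ! (p - 1))"
         "hd Vq = Inr (vs ! p)" "last Vq = Inr (vs ! (p + q - 1))" using pq pl
        using hl_take_map[of p vs Inr] hl_take_drop_map[of q p vs Inr] by (auto simp: Vp_def Vq_def)
      have cY: "count_list Y True = length (map Inl rest')" "count_list Y False = length (drop q (drop p (map Inr vs)))"
        using Q cT cF rs by (auto simp: count_rep_F count_rep_F2)
      have sR: "set R \<subseteq> Inl ` set rest' \<union> range Inr" unfolding R_def using mrg_set[OF cY]
        by (auto simp: drop_map)
      have w: "mrg (True # Q) (map Inl (k # Suc k # rest)) (map Inr vs) = Inl k # Vp @ Inl (Suc k) # Vq @ Inl r0 # R"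
        using Q pl rs by (simp add: mrg_repF Vp_def Vq_def R_def)
      have e: "W ?c1 (Vq @ Inl r0 # R) = W ?c2 (Vq @ Inl r0 # R)"
        using sR nr rs by (intro W_swp_other[symmetric]) (auto simp: Vq_def take_map drop_map)
      have e1: "W ?c1 Vp = W ?c2 Vp" by (intro W_swp_other[symmetric]) (auto simp: Vp_def take_map)
      show ?thesis unfolding 3 w using Vne hV e e1
        by (simp add: W_app3 W_app2)
    qed
  qed
qed


lemma hd_mrg: "P \<noteq> [] \<Longrightarrow> hd (mrg P xs ys) = (if hd P then hd xs else hd ys)"
  by (cases P) auto

lemma phi_weight:
  "count_list P True = length us \<Longrightarrow> count_list P False = length vs \<Longrightarrow>
   us = [k0..<e] \<Longrightarrow> k0 + i + 2 < e \<Longrightarrow> Suc (k0 + i) < length du \<Longrightarrow>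
   W (cw du dv) (mrg (phi i P) (map Inl us) (map Inr vs)) =
   W (cw (swp (k0 + i) du) dv) (mrg P (map Inl us) (map Inr vs))"
proof (induction i P arbitrary: us vs k0 rule: phi.induct)
  case (1 i) thus ?case by simp
next
  case (2 i P)
  then obtain v vs' where vs: "vs = v # vs'" by (cases vs) auto
  have cP: "count_list P True \<ge> i + 3" using 2 by simp
  have IH: "W (cw du dv) (mrg (phi i P) (map Inl us) (map Inr vs')) =
     W (cw (swp (k0 + i) du) dv) (mrg P (map Inl us) (map Inr vs'))" using 2 vs by auto
  have Pne: "P \<noteq> []" using cP by (cases P) auto
  have hh: "hd (mrg (phi i P) (map Inl us) (map Inr vs')) = hd (mrg P (map Inl us) (map Inr vs'))"
    using phi_props[OF cP] Pne by (simp add: hd_mrg)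
  have ne: "mrg (phi i P) (map Inl us) (map Inr vs') \<noteq> []" "mrg P (map Inl us) (map Inr vs') \<noteq> []"
    using phi_props[OF cP] Pne by (auto simp: mrg_length simp flip: length_greater_0_conv)
  show ?case using IH hh ne vs by (simp add: W_Cons cw_swp_other)
next
  case (3 P)
  obtain rest where us: "us = k0 # Suc k0 # rest" and rest: "rest = [Suc (Suc k0)..<e]"
    using 3 by (simp add: upt_conv_Cons)
  have rne: "rest \<noteq> []" using 3 rest by simp
  have "W (cw du dv) (mrg (True # psi P) (map Inl (k0 # Suc k0 # rest)) (map Inr vs)) =
        W (cw (swp k0 du) dv) (mrg (True # P) (map Inl (k0 # Suc k0 # rest)) (map Inr vs))"
    by (rule psi_weight) (use 3 us rest rne in auto)
  thus ?case using us by simp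
next
  case (4 i P)
  obtain us' where us: "us = k0 # us'" and us': "us' = [Suc k0..<e]"
    using 4 by (simp add: upt_conv_Cons)
  have cP: "count_list P True \<ge> i + 3" using 4 by simp
  have IH: "W (cw du dv) (mrg (phi i P) (map Inl us') (map Inr vs)) =
     W (cw (swp (Suc k0 + i) du) dv) (mrg P (map Inl us') (map Inr vs))"
    by (rule "4.IH") (use 4 us us' in auto)
  have Pne: "P \<noteq> []" using cP by (cases P) auto
  have hh: "hd (mrg (phi i P) (map Inl us') (map Inr vs)) = hd (mrg P (map Inl us') (map Inr vs))"
    using phi_props[OF cP] Pne by (simp add: hd_mrg)
  have ne: "mrg (phi i P) (map Inl us') (map Inr vs) \<noteq> []" "mrg P (map Inl us') (map Inr vs) \<noteq> []"
    using phi_props[OF cP] Pne by (auto simp: mrg_length simp flip: length_greater_0_conv)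
  have e: "Suc k0 + i = k0 + Suc i" by simp
  show ?case using IH hh ne us e by (simp add: W_Cons cw_swp_other)
qed

definition Nxy :: "bool \<Rightarrow> bool \<Rightarrow> nat \<Rightarrow> nat \<Rightarrow> bool list \<Rightarrow> bool list \<Rightarrow> (nat \<Rightarrow> 'b::comm_monoid_add) \<Rightarrow> 'b" where
  "Nxy x y a b du dv g = (\<Sum>P\<in>{P\<in>pats a b. hd P = x \<and> last P = y}. g (W (cw du dv) (M P a b)))"

lemma Nxy_swp:
  assumes "i + 2 < a" "Suc i < length du"
  shows "Nxy x y a b du dv g = Nxy x y a b (swp i du) dv g"
proof -
  let ?S = "{P \<in> pats a b. hd P = x \<and> last P = y}"
  have key: "phi i (phi i P) = P \<and> phi i P \<in> ?S \<and>
     g (W (cw (swp i du) dv) (M (phi i P) a b)) = g (W (cw du dv) (M P a b))" if P: "P \<in> ?S" for P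
  proof -
    have c: "count_list P True \<ge> i + 3" using assms P by (auto simp: pats_def)
    have Pne: "P \<noteq> []" using c by (cases P) auto
    have cF: "count_list P False = b" using P count_TF[of P] by (auto simp: pats_def)
    have "W (cw du dv) (M (phi i (phi i P)) a b) = W (cw (swp (0 + i) du) dv) (M (phi i P) a b)"
      unfolding M_def
      by (rule phi_weight) (use phi_props[OF c] P cF assms in \<open>auto simp: pats_def\<close>)
    thus ?thesis using phi_props[OF c] P Pne by (auto simp: pats_def)
  qed
  show ?thesis unfolding Nxy_def
    by (rule sum.reindex_bij_witness[where i = "phi i" and j = "phi i"]) (use key in auto)
qed

lemma swp_app: "swp (length xs) (xs @ x # y # ys) = xs @ y # x # ys"
  unfolding swp_def by (simp add: list_update_append nth_append)

lemma Nxy_swap_list: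
  assumes "length (xs @ x # y # ys) = a - 1"
  shows "Nxy c d a b (xs @ x # y # ys) dv g = Nxy c d a b (xs @ y # x # ys) dv g"
proof -
  have "Nxy c d a b (xs @ x # y # ys) dv g = Nxy c d a b (swp (length xs) (xs @ x # y # ys)) dv g"
    by (rule Nxy_swp) (use assms in auto)
  thus ?thesis by (simp add: swp_app)
qed

lemma perm_inv_insort:
  assumes "\<And>xs x y ys. length (xs @ x # y # ys) = n \<Longrightarrow> F (xs @ x # y # ys) = F (xs @ y # x # ys)"
    and "length (x # zs) = n"
  shows "F (x # zs) = F (insort x zs)"
  using assms
proof (induction zs arbitrary: F n)
  case Nil thus ?case by simp
next
  case (Cons z zs)
  show ?case
  proof (cases "x \<le> z")
    case True thus ?thesis by simp
  next
    case False
    have "F (x # z # zs) = F (z # x # zs)" using Cons.prems(1)[of "[]" x z zs] Cons.prems(2) by simp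
    also have "\<dots> = F (z # insort x zs)"
    proof -
      have "(\<lambda>l. F (z # l)) (x # zs) = (\<lambda>l. F (z # l)) (insort x zs)"
        by (rule Cons.IH[where n = "n - 1"]) (use Cons.prems(1)[of "z # _"] Cons.prems(2) in auto)
      thus ?thesis by simp
    qed
    finally show ?thesis using False by simp
  qed
qed

lemma perm_inv_sort:
  assumes "\<And>xs x y ys. length (xs @ x # y # ys) = n \<Longrightarrow> F (xs @ x # y # ys) = F (xs @ y # x # ys)"
    and "length zs = n"
  shows "F zs = F (sort zs)"
  using assms
proof (induction zs arbitrary: F n)
  case Nil thus ?case by simp
next
  case (Cons x zs)
  have "(\<lambda>l. F (x # l)) zs = (\<lambda>l. F (x # l)) (sort zs)"
    by (rule Cons.IH[where n = "n - 1"]) (use Cons.prems(1)[of "x # _"] Cons.prems(2) in auto)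
  hence "F (x # zs) = F (x # sort zs)" by simp
  also have "\<dots> = F (insort x (sort zs))"
    by (rule perm_inv_insort[where n = n]) (use Cons.prems in auto)
  finally show ?case by simp
qed

lemma bool_sort_eq:
  fixes xs ys :: "bool list"
  assumes "length xs = length ys" "count_list xs True = count_list ys True"
  shows "sort xs = sort ys"
proof -
  have "count_list xs False = count_list ys False" using assms count_TF[of xs] count_TF[of ys] by simp
  hence "\<forall>z. count_list xs z = count_list ys z" using assms(2) by (metis (full_types))
  hence "mset xs = mset ys" by (simp add: multiset_eq_iff count_mset)
  thus ?thesis by (intro properties_for_sort) simp_all
qed

lemma Nxy_count_u:
  assumes "length du = a - 1" "length du' = a - 1" "count_list du True = count_list du' True"
  shows "Nxy c d a b du dv g = Nxy c d a b du' dv g"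
proof -
  have sw: "\<And>xs x y ys. length (xs @ x # y # ys) = a - 1 \<Longrightarrow>
     (\<lambda>l. Nxy c d a b l dv g) (xs @ x # y # ys) = (\<lambda>l. Nxy c d a b l dv g) (xs @ y # x # ys)"
    using Nxy_swap_list by blast
  have "Nxy c d a b du dv g = Nxy c d a b (sort du) dv g" using perm_inv_sort[where F = "\<lambda>l. Nxy c d a b l dv g", OF sw assms(1)] by simp
  also have "\<dots> = Nxy c d a b (sort du') dv g" using bool_sort_eq[of du du'] assms by simp
  also have "\<dots> = Nxy c d a b du' dv g" using perm_inv_sort[where F = "\<lambda>l. Nxy c d a b l dv g", OF sw assms(2)] by simp
  finally show ?thesis .
qed


lemma mrg_app: "mrg (P @ Q) xs ys = mrg P xs ys @ mrg Q (drop (count_list P True) xs) (drop (count_list P False) ys)"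
  by (induction P arbitrary: xs ys) (auto simp: drop_Suc)

lemma mrg_take: "count_list P True \<le> n \<Longrightarrow> count_list P False \<le> m \<Longrightarrow>
  mrg P (take n xs) (take m ys) = mrg P xs ys"
proof (induction P arbitrary: xs ys n m)
  case Nil thus ?case by simp
next
  case (Cons b P)
  show ?case
  proof (cases b)
    case True
    then obtain n' where n: "n = Suc n'" using Cons.prems by (cases n) auto
    show ?thesis using Cons.IH[of n' m "tl xs" ys] Cons.prems True n
      by (cases xs) (auto simp: tl_take)
  next
    case False
    then obtain m' where m: "m = Suc m'" using Cons.prems by (cases m) auto
    show ?thesis using Cons.IH[of n m' xs "tl ys"] Cons.prems False m
      by (cases ys) (auto simp: tl_take)
  qed
qed

lemma mrg_rev: "count_list P True = length xs \<Longrightarrow> count_list P False = length ys \<Longrightarrow>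
  rev (mrg P xs ys) = mrg (rev P) (rev xs) (rev ys)"
proof (induction P arbitrary: xs ys)
  case Nil thus ?case by simp
next
  case (Cons b P)
  show ?case
  proof (cases b)
    case True
    then obtain x xs' where xs: "xs = x # xs'" using Cons.prems by (cases xs) auto
    have IH: "rev (mrg P xs' ys) = mrg (rev P) (rev xs') (rev ys)" using Cons True xs by auto
    have "mrg (rev P) (rev xs' @ [x]) (rev ys) = mrg (rev P) (take (length xs') (rev xs' @ [x])) (take (length ys) (rev ys))"
      using Cons.prems True xs by (subst mrg_take) auto
    hence e: "mrg (rev P) (rev xs' @ [x]) (rev ys) = mrg (rev P) (rev xs') (rev ys)" by simp
    show ?thesis using IH True xs Cons.prems by (simp add: mrg_app e)
  next
    case False
    then obtain y ys' where ys: "ys = y # ys'" using Cons.prems by (cases ys) auto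
    have IH: "rev (mrg P xs ys') = mrg (rev P) (rev xs) (rev ys')" using Cons False ys by auto
    have "mrg (rev P) (rev xs) (rev ys' @ [y]) = mrg (rev P) (take (length xs) (rev xs)) (take (length ys') (rev ys' @ [y]))"
      using Cons.prems False ys by (subst mrg_take) auto
    hence e: "mrg (rev P) (rev xs) (rev ys' @ [y]) = mrg (rev P) (rev xs) (rev ys')" by simp
    show ?thesis using IH False ys Cons.prems by (simp add: mrg_app e)
  qed
qed

lemma mrg_map: "count_list P True = length xs \<Longrightarrow> count_list P False = length ys \<Longrightarrow>
  map h (mrg P xs ys) = mrg P (map h xs) (map h ys)"
proof (induction P arbitrary: xs ys)
  case Nil thus ?case by simp
next
  case (Cons b P)
  thus ?case by (cases b; cases xs; cases ys) auto
qed

lemma mrg_not: "mrg (map Not P) xs ys = mrg P ys xs"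
  by (induction P arbitrary: xs ys) auto

lemma filter_mrg: "count_list P True = length xs \<Longrightarrow> count_list P False = length ys \<Longrightarrow>
  (\<forall>x\<in>set xs. p x) \<Longrightarrow> (\<forall>y\<in>set ys. \<not> p y) \<Longrightarrow> filter p (mrg P xs ys) = xs"
proof (induction P arbitrary: xs ys)
  case Nil thus ?case by simp
next
  case (Cons b P)
  thus ?case by (cases b; cases xs; cases ys) auto
qed

lemma filter_mrg2: "count_list P True = length xs \<Longrightarrow> count_list P False = length ys \<Longrightarrow>
  (\<forall>x\<in>set xs. \<not> p x) \<Longrightarrow> (\<forall>y\<in>set ys. p y) \<Longrightarrow> filter p (mrg P xs ys) = ys"
proof (induction P arbitrary: xs ys)
  case Nil thus ?case by simp
next
  case (Cons b P)
  thus ?case by (cases b; cases xs; cases ys) auto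
qed

lemma map_mrg_pat: "count_list P True = length xs \<Longrightarrow> count_list P False = length ys \<Longrightarrow>
  (\<forall>x\<in>set xs. p x) \<Longrightarrow> (\<forall>y\<in>set ys. \<not> p y) \<Longrightarrow> map p (mrg P xs ys) = P"
proof (induction P arbitrary: xs ys)
  case Nil thus ?case by simp
next
  case (Cons b P)
  thus ?case by (cases b; cases xs; cases ys) auto
qed

lemma W_rev: "W c (rev xs) = W (\<lambda>x y. c y x) xs"
proof (induction xs)
  case Nil thus ?case by simp
next
  case (Cons x xs) thus ?case by (cases xs) (auto simp: W_app)
qed

lemma W_map: "W c (map h xs) = W (\<lambda>x y. c (h x) (h y)) xs"
  by (induction xs) (auto simp: W_Cons hd_map)

definition adj :: "'a list \<Rightarrow> ('a \<times> 'a) set" where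
  "adj xs = set (zip xs (tl xs))"

lemma adj_Cons: "adj (x # xs) = (if xs = [] then {} else insert (x, hd xs) (adj xs))"
  unfolding adj_def by (cases xs) auto

lemma W_cong_adj: "(\<And>x y. (x, y) \<in> adj xs \<Longrightarrow> c x y = c' x y) \<Longrightarrow> W c xs = W c' xs"
proof (induction xs)
  case Nil thus ?case by simp
next
  case (Cons x xs)
  show ?case
  proof (cases xs)
    case Nil thus ?thesis by simp
  next
    case (Cons y ys)
    have "W c xs = W c' xs" using Cons.IH Cons.prems \<open>xs = y # ys\<close> by (auto simp: adj_Cons)
    moreover have "c x y = c' x y" using Cons.prems \<open>xs = y # ys\<close> by (auto simp: adj_Cons)
    ultimately show ?thesis using \<open>xs = y # ys\<close> by simp
  qed
qed

lemma adj_sub_Cons: "adj xs \<subseteq> adj (z # xs)"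
  by (cases xs) (auto simp: adj_Cons adj_def)

lemma adj_filter: "(x, y) \<in> adj xs \<Longrightarrow> p x \<Longrightarrow> p y \<Longrightarrow> (x, y) \<in> adj (filter p xs)"
proof (induction xs)
  case Nil thus ?case by (simp add: adj_def)
next
  case (Cons z xs)
  show ?case
  proof (cases "xs = []")
    case True thus ?thesis using Cons by (simp add: adj_def)
  next
    case False
    show ?thesis
    proof (cases "(x, y) = (z, hd xs)")
      case True
      then obtain xs' where "xs = y # xs'" using False by (cases xs) auto
      thus ?thesis using True Cons by (simp add: adj_Cons)
    next
      case nt: False
      hence "(x, y) \<in> adj xs" using Cons.prems False by (auto simp: adj_Cons)
      hence "(x, y) \<in> adj (filter p xs)" using Cons by simp
      thus ?thesis using adj_sub_Cons[of "filter p xs" z] by (cases "p z") auto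
    qed
  qed
qed

lemma adj_upt: "(i, j) \<in> adj [0..<a] \<Longrightarrow> j = Suc i \<and> j < a"
  unfolding adj_def by (auto simp: set_zip tl_upt)

lemma adj_map_eq: "adj (map h xs) = (\<lambda>(a, b). (h a, h b)) ` adj xs"
  unfolding adj_def by (simp add: map_tl[symmetric] zip_map_map)

lemma adj_map: "(x, y) \<in> adj (map h xs) \<Longrightarrow> \<exists>x' y'. (x', y') \<in> adj xs \<and> x = h x' \<and> y = h y'"
  unfolding adj_map_eq by auto

lemma adj_subset: "(x, y) \<in> adj xs \<Longrightarrow> x \<in> set xs \<and> y \<in> set xs"
  unfolding adj_def by (auto dest: set_zip_leftD set_zip_rightD list.set_sel(2)[rotated] intro: list.set_sel(2))

lemma M_valid: "P \<in> pats a b \<Longrightarrow> count_list P True = length (map Inl [0..<a] :: (nat + nat) list) \<and>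
   count_list P False = length (map Inr [0..<b] :: (nat + nat) list)"
  using count_TF[of P] by (auto simp: pats_def)

lemma M_set: "P \<in> pats a b \<Longrightarrow> set (M P a b) = Inl ` {0..<a} \<union> Inr ` {0..<b}"
  unfolding M_def using mrg_set[OF conjunct1[OF M_valid] conjunct2[OF M_valid]] by auto

lemma M_adj:
  assumes "P \<in> pats a b" "(x, y) \<in> adj (M P a b)"
  shows "(x = Inl i \<and> y = Inl j \<longrightarrow> j = Suc i \<and> j < a) \<and> (x = Inr i \<and> y = Inr j \<longrightarrow> j = Suc i \<and> j < b)"
proof -
  have v: "count_list P True = length (map Inl [0..<a] :: (nat + nat) list)"
    "count_list P False = length (map Inr [0..<b] :: (nat + nat) list)" using M_valid[OF assms(1)] by auto
  have fl: "filter isl (M P a b) = map Inl [0..<a]" unfolding M_def by (rule filter_mrg[OF v]) auto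
  have fr: "filter (Not \<circ> isl) (M P a b) = map Inr [0..<b]" unfolding M_def by (rule filter_mrg2[OF v]) auto
  have A: "j = Suc i \<and> j < a" if "x = Inl i" "y = Inl j"
  proof -
    have "(x, y) \<in> adj (map Inl [0..<a])" using adj_filter[OF assms(2), of isl] that fl by simp
    then obtain x' y' where "(x', y') \<in> adj [0..<a]" "x = Inl x'" "y = Inl y'" using adj_map[of x y Inl "[0..<a]"] by blast
    thus ?thesis using that adj_upt by auto
  qed
  have B: "j = Suc i \<and> j < b" if "x = Inr i" "y = Inr j"
  proof -
    have "(x, y) \<in> adj (map Inr [0..<b])" using adj_filter[OF assms(2), of "Not \<circ> isl"] that fr by simp
    then obtain x' y' where "(x', y') \<in> adj [0..<b]" "x = Inr x'" "y = Inr y'" using adj_map[of x y Inr "[0..<b]"] by blast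
    thus ?thesis using that adj_upt by auto
  qed
  show ?thesis using A B by blast
qed


fun csame :: "bool list \<Rightarrow> bool list \<Rightarrow> nat + nat \<Rightarrow> nat + nat \<Rightarrow> bool" where
  "csame du dv (Inl i) (Inl j) = du ! i"
| "csame du dv (Inr i) (Inr j) = dv ! i"
| "csame du dv _ _ = False"

lemma csame_same: "csame du dv x y \<Longrightarrow> isl x = isl y"
  by (cases x; cases y) auto

lemma cw_split: "cw du dv x y = (csame du dv x y \<or> (\<not> isl x \<and> isl y))"
  by (cases x; cases y) auto

lemma W_disj: "(\<And>x y. \<not> (A x y \<and> B x y)) \<Longrightarrow> W (\<lambda>x y. A x y \<or> B x y) xs = W A xs + W B xs"
  by (induction xs) (auto simp: W_Cons)

lemma count_map_not: "count_list (map Not P) True = count_list P False"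
  by (induction P) auto
lemma count_map_not2: "count_list (map Not P) False = count_list P True"
  by (induction P) auto

lemma FT_TF: "P \<noteq> [] \<Longrightarrow> W (\<lambda>x y. \<not> x \<and> y) P + (if hd P then 1 else 0) =
   W (\<lambda>x y. x \<and> \<not> y) P + (if last P then 1 else 0)"
proof (induction P)
  case Nil thus ?case by simp
next
  case (Cons b P)
  show ?case
  proof (cases P)
    case Nil thus ?thesis by simp
  next
    case (Cons c Q)
    thus ?thesis using Cons.IH by auto
  qed
qed

lemma rev_upt_map: "rev [0..<a] = map (\<lambda>i. a - 1 - i) [0..<a]"
  by (rule nth_equalityI) (auto simp: rev_nth)

lemma M_rev_gen:
  assumes "P \<in> pats a b"
  shows "mrg (rev P) (map f (map Inl [0..<a])) (map f (map Inr [0..<b])) =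
         rev (map f (mrg P (map (\<lambda>i. Inl (a - 1 - i)) [0..<a]) (map (\<lambda>j. Inr (b - 1 - j)) [0..<b])))"
proof -
  have v: "count_list P True = length (map (\<lambda>i. Inl (a - 1 - i)) [0..<a] :: (nat + nat) list)"
      "count_list P False = length (map (\<lambda>j. Inr (b - 1 - j)) [0..<b] :: (nat + nat) list)"
    using M_valid[OF assms] by auto
  have "rev (map f (mrg P (map (\<lambda>i. Inl (a - 1 - i)) [0..<a]) (map (\<lambda>j. Inr (b - 1 - j)) [0..<b])))
     = rev (mrg P (map f (map (\<lambda>i. Inl (a - 1 - i)) [0..<a])) (map f (map (\<lambda>j. Inr (b - 1 - j)) [0..<b])))"
    using mrg_map[OF v] by simp
  also have "\<dots> = mrg (rev P) (rev (map f (map (\<lambda>i. Inl (a - 1 - i)) [0..<a]))) (rev (map f (map (\<lambda>j. Inr (b - 1 - j)) [0..<b])))"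
    by (rule mrg_rev) (use v in auto)
  also have "rev (map f (map (\<lambda>i. Inl (a - 1 - i)) [0..<a])) = map f (map Inl [0..<a])"
    by (rule nth_equalityI) (auto simp: rev_nth)
  also have "rev (map f (map (\<lambda>j. Inr (b - 1 - j)) [0..<b])) = map f (map Inr [0..<b])"
    by (rule nth_equalityI) (auto simp: rev_nth)
  finally show ?thesis by simp
qed


definition gfl :: "nat \<Rightarrow> nat \<Rightarrow> nat + nat \<Rightarrow> nat + nat" where
  "gfl a b = case_sum (\<lambda>i. Inl (a - 1 - i)) (\<lambda>j. Inr (b - 1 - j))"

lemma M_rev_map:
  assumes "P \<in> pats a b"
  shows "mrg (rev P) (map f (map Inl [0..<a])) (map f (map Inr [0..<b])) = rev (map (f \<circ> gfl a b) (M P a b))"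
proof -
  have v: "count_list P True = length (map Inl [0..<a] :: (nat + nat) list)"
      "count_list P False = length (map Inr [0..<b] :: (nat + nat) list)"
    using M_valid[OF assms] by auto
  have "map (gfl a b) (M P a b) = mrg P (map (\<lambda>i. Inl (a - 1 - i)) [0..<a]) (map (\<lambda>j. Inr (b - 1 - j)) [0..<b])"
    unfolding M_def using mrg_map[OF v, of "gfl a b"] by (simp add: gfl_def comp_def)
  moreover have "map (f \<circ> gfl a b) (M P a b) = map f (map (gfl a b) (M P a b))" by simp
  ultimately show ?thesis using M_rev_gen[OF assms, of f] by simp
qed

lemma M_rev: "P \<in> pats a b \<Longrightarrow> M (rev P) a b = rev (map (gfl a b) (M P a b))"
  using M_rev_map[of P a b id] by (simp add: M_def)

lemma M_sym: "P \<in> pats a b \<Longrightarrow> M (rev (map Not P)) b a = rev (map (case_sum Inr Inl \<circ> gfl a b) (M P a b))"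
proof -
  assume P: "P \<in> pats a b"
  have "rev (map Not P) = map Not (rev P)" by (simp add: rev_map)
  hence "M (rev (map Not P)) b a = mrg (rev P) (map Inr [0..<a]) (map Inl [0..<b])"
    by (simp add: M_def mrg_not)
  also have "\<dots> = mrg (rev P) (map (case_sum Inr Inl) (map Inl [0..<a])) (map (case_sum Inr Inl) (map Inr [0..<b]))"
    by (simp add: comp_def)
  also have "\<dots> = rev (map (case_sum Inr Inl \<circ> gfl a b) (M P a b))" by (rule M_rev_map[OF P])
  finally show ?thesis .
qed

lemma rev_nth_gap: "length xs = a - 1 \<Longrightarrow> Suc i < a \<Longrightarrow> rev xs ! (a - Suc (Suc i)) = xs ! i"
proof -
  assume a: "length xs = a - 1" "Suc i < a"
  hence "a - Suc (Suc i) < length xs" by simp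
  hence "rev xs ! (a - Suc (Suc i)) = xs ! (length xs - Suc (a - Suc (Suc i)))" by (rule rev_nth)
  also have "length xs - Suc (a - Suc (Suc i)) = i" using a by simp
  finally show ?thesis .
qed

lemma weight_sym:
  assumes P: "P \<in> pats a b" and du: "length du = a - 1" and dv: "length dv = b - 1"
  shows "W (cw (rev dv) (rev du)) (M (rev (map Not P)) b a) = W (cw du dv) (M P a b)"
proof -
  have "W (cw (rev dv) (rev du)) (M (rev (map Not P)) b a) =
     W (\<lambda>x y. cw (rev dv) (rev du) ((case_sum Inr Inl \<circ> gfl a b) y) ((case_sum Inr Inl \<circ> gfl a b) x)) (M P a b)"
    by (simp add: M_sym[OF P] W_rev W_map)
  also have "\<dots> = W (cw du dv) (M P a b)"
  proof (rule W_cong_adj)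
    fix x y assume xy: "(x, y) \<in> adj (M P a b)"
    have A: "x \<in> set (M P a b)" "y \<in> set (M P a b)" using adj_subset[OF xy] by auto
    show "cw (rev dv) (rev du) ((case_sum Inr Inl \<circ> gfl a b) y) ((case_sum Inr Inl \<circ> gfl a b) x) = cw du dv x y"
    proof (cases x)
      case (Inl i)
      show ?thesis
      proof (cases y)
        case (Inl j)
        hence "j = Suc i \<and> j < a" using M_adj[OF P xy] \<open>x = Inl i\<close> by blast
        thus ?thesis using Inl \<open>x = Inl i\<close> du by (simp add: gfl_def rev_nth_gap)
      next
        case (Inr j) thus ?thesis using \<open>x = Inl i\<close> by (simp add: gfl_def)
      qed
    next
      case (Inr i)
      show ?thesis
      proof (cases y)
        case (Inr j)
        hence "j = Suc i \<and> j < b" using M_adj[OF P xy] \<open>x = Inr i\<close> by blast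
        thus ?thesis using Inr \<open>x = Inr i\<close> dv by (simp add: gfl_def rev_nth_gap)
      next
        case (Inl j) thus ?thesis using \<open>x = Inr i\<close> by (simp add: gfl_def)
      qed
    qed
  qed
  finally show ?thesis .
qed

lemma weight_rev:
  assumes P: "P \<in> pats a b" and du: "length du = a - 1" and dv: "length dv = b - 1"
    and hl: "P \<noteq> []" "hd P = False" "last P = True"
  shows "W (cw du dv) (M P a b) = Suc (W (cw (rev du) (rev dv)) (M (rev P) a b))"
proof -
  let ?c2 = "\<lambda>x y. csame du dv x y \<or> (isl x \<and> \<not> isl y)"
  have "W (cw (rev du) (rev dv)) (M (rev P) a b) =
     W (\<lambda>x y. cw (rev du) (rev dv) (gfl a b y) (gfl a b x)) (M P a b)"
    by (simp add: M_rev[OF P] W_rev W_map)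
  also have "\<dots> = W ?c2 (M P a b)"
  proof (rule W_cong_adj)
    fix x y assume xy: "(x, y) \<in> adj (M P a b)"
    show "cw (rev du) (rev dv) (gfl a b y) (gfl a b x) = ?c2 x y"
    proof (cases x)
      case (Inl i)
      show ?thesis
      proof (cases y)
        case (Inl j)
        hence "j = Suc i \<and> j < a" using M_adj[OF P xy] \<open>x = Inl i\<close> by blast
        thus ?thesis using Inl \<open>x = Inl i\<close> du by (simp add: gfl_def rev_nth_gap)
      next
        case (Inr j) thus ?thesis using \<open>x = Inl i\<close> by (simp add: gfl_def)
      qed
    next
      case (Inr i)
      show ?thesis
      proof (cases y)
        case (Inr j)
        hence "j = Suc i \<and> j < b" using M_adj[OF P xy] \<open>x = Inr i\<close> by blast
        thus ?thesis using Inr \<open>x = Inr i\<close> dv by (simp add: gfl_def rev_nth_gap)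
      next
        case (Inl j) thus ?thesis using \<open>x = Inr i\<close> by (simp add: gfl_def)
      qed
    qed
  qed
  also have "\<dots> = W (csame du dv) (M P a b) + W (\<lambda>x y. isl x \<and> \<not> isl y) (M P a b)"
    by (rule W_disj) (use csame_same in blast)
  finally have e1: "W (cw (rev du) (rev dv)) (M (rev P) a b) = W (csame du dv) (M P a b) + W (\<lambda>x y. x \<and> \<not> y) P"
  proof -
    have v: "count_list P True = length (map Inl [0..<a] :: (nat + nat) list)"
      "count_list P False = length (map Inr [0..<b] :: (nat + nat) list)" using M_valid[OF P] by auto
    have "map isl (M P a b) = P" unfolding M_def by (rule map_mrg_pat[OF v]) auto
    hence "W (\<lambda>x y. isl x \<and> \<not> isl y) (M P a b) = W (\<lambda>x y. x \<and> \<not> y) P"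
      using W_map[of "\<lambda>x y. x \<and> \<not> y" isl "M P a b"] by simp
    thus "W (cw (rev du) (rev dv)) (M (rev P) a b) = W (csame du dv) (M P a b) + W (\<lambda>x y. isl x \<and> \<not> isl y) (M P a b) \<Longrightarrow> ?thesis"
      by simp
  qed
  have e2: "W (cw du dv) (M P a b) = W (csame du dv) (M P a b) + W (\<lambda>x y. \<not> x \<and> y) P"
  proof -
    have v: "count_list P True = length (map Inl [0..<a] :: (nat + nat) list)"
      "count_list P False = length (map Inr [0..<b] :: (nat + nat) list)" using M_valid[OF P] by auto
    have "map isl (M P a b) = P" unfolding M_def by (rule map_mrg_pat[OF v]) auto
    hence m: "W (\<lambda>x y. \<not> isl x \<and> isl y) (M P a b) = W (\<lambda>x y. \<not> x \<and> y) P"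
      using W_map[of "\<lambda>x y. \<not> x \<and> y" isl "M P a b"] by simp
    have "cw du dv = (\<lambda>x y. csame du dv x y \<or> (\<not> isl x \<and> isl y))" by (intro ext) (simp add: cw_split)
    hence "W (cw du dv) (M P a b) = W (\<lambda>x y. csame du dv x y \<or> (\<not> isl x \<and> isl y)) (M P a b)"
      by simp
    also have "\<dots> = W (csame du dv) (M P a b) + W (\<lambda>x y. \<not> isl x \<and> isl y) (M P a b)"
      by (rule W_disj) (use csame_same in blast)
    finally show ?thesis using m by simp
  qed
  have e3: "W (\<lambda>x y. \<not> x \<and> y) P = Suc (W (\<lambda>x y. x \<and> \<not> y) P)" using FT_TF[OF hl(1)] hl by simp
  show ?thesis using e1 e2 e3 by simp
qed


lemma pats_nonempty: "P \<in> pats a b \<Longrightarrow> 0 < a + b \<Longrightarrow> P \<noteq> []"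
  by (auto simp: pats_def)

lemma rmn_pats: "P \<in> pats a b \<Longrightarrow> rev (map Not P) \<in> pats b a"
  using count_TF[of P] by (auto simp: pats_def count_map_not)

lemma Nxy_sym:
  assumes ab: "0 < a + b" and du: "length du = a - 1" and dv: "length dv = b - 1"
  shows "Nxy x y a b du dv g = Nxy (\<not> y) (\<not> x) b a (rev dv) (rev du) g"
  unfolding Nxy_def
proof (rule sum.reindex_bij_witness[where j = "\<lambda>P. rev (map Not P)" and i = "\<lambda>P. rev (map Not P)"])
  fix P assume P: "P \<in> {P \<in> pats a b. hd P = x \<and> last P = y}"
  have ne: "P \<noteq> []" using P ab pats_nonempty by blast
  show "rev (map Not (rev (map Not P))) = P" by (simp add: rev_map comp_def)
  show "rev (map Not P) \<in> {P \<in> pats b a. hd P = (\<not> y) \<and> last P = (\<not> x)}"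
    using P ne rmn_pats[of P a b] by (auto simp: hd_rev last_rev hd_map last_map)
  show "g (W (cw (rev dv) (rev du)) (M (rev (map Not P)) b a)) = g (W (cw du dv) (M P a b))"
    using weight_sym[of P a b du dv] P du dv by simp
next
  fix P assume P: "P \<in> {P \<in> pats b a. hd P = (\<not> y) \<and> last P = (\<not> x)}"
  have ne: "P \<noteq> []" using P ab pats_nonempty[of P b a] by auto
  show "rev (map Not (rev (map Not P))) = P" by (simp add: rev_map comp_def)
  show "rev (map Not P) \<in> {P \<in> pats a b. hd P = x \<and> last P = y}"
    using P ne rmn_pats[of P b a] by (auto simp: hd_rev last_rev hd_map last_map)
qed

lemma rev_pats: "P \<in> pats a b \<Longrightarrow> rev P \<in> pats a b"
  by (auto simp: pats_def)

lemma Nxy_rev: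
  assumes ab: "0 < a + b" and du: "length du = a - 1" and dv: "length dv = b - 1"
  shows "Nxy False True a b du dv g = Nxy True False a b (rev du) (rev dv) (\<lambda>w. g (Suc w))"
  unfolding Nxy_def
proof (rule sum.reindex_bij_witness[where j = rev and i = rev])
  fix P assume P: "P \<in> {P \<in> pats a b. hd P = False \<and> last P = True}"
  have ne: "P \<noteq> []" using P ab pats_nonempty by blast
  show "rev (rev P) = P" by simp
  show "rev P \<in> {P \<in> pats a b. hd P = True \<and> last P = False}"
    using P ne rev_pats[of P a b] by (auto simp: hd_rev last_rev)
  show "g (Suc (W (cw (rev du) (rev dv)) (M (rev P) a b))) = g (W (cw du dv) (M P a b))"
    using weight_rev[of P a b du dv] P du dv ne by simp
next
  fix P assume P: "P \<in> {P \<in> pats a b. hd P = True \<and> last P = False}"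
  have ne: "P \<noteq> []" using P ab pats_nonempty by blast
  show "rev (rev P) = P" by simp
  show "rev P \<in> {P \<in> pats a b. hd P = False \<and> last P = True}"
    using P ne rev_pats[of P a b] by (auto simp: hd_rev last_rev)
qed

lemma Nxy_count:
  assumes ab: "0 < a + b" and du: "length du = a - 1" "length du' = a - 1"
    "count_list du True = count_list du' True"
    and dv: "length dv = b - 1" "length dv' = b - 1" "count_list dv True = count_list dv' True"
  shows "Nxy x y a b du dv g = Nxy x y a b du' dv' g"
proof -
  have "Nxy x y a b du dv g = Nxy x y a b du' dv g" by (rule Nxy_count_u) (use du in auto)
  also have "\<dots> = Nxy (\<not> y) (\<not> x) b a (rev dv) (rev du') g" by (rule Nxy_sym) (use ab du dv in auto)
  also have "\<dots> = Nxy (\<not> y) (\<not> x) b a (rev dv') (rev du') g" by (rule Nxy_count_u) (use dv in auto)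
  also have "\<dots> = Nxy (\<not> \<not> x) (\<not> \<not> y) a b (rev (rev du')) (rev (rev dv')) g"
    by (rule Nxy_sym) (use ab du dv in auto)
  finally show ?thesis by simp
qed

definition cI :: "bool list \<Rightarrow> bool" where "cI P = (P = [] \<or> \<not> last P)"
definition cII :: "bool list \<Rightarrow> bool" where "cII P = (P = [] \<or> \<not> hd P)"

definition Kc :: "(bool list \<Rightarrow> bool) \<Rightarrow> nat \<Rightarrow> nat \<Rightarrow> bool list \<Rightarrow> bool list \<Rightarrow> (nat \<Rightarrow> 'b::comm_monoid_add) \<Rightarrow> 'b" where
  "Kc c a b du dv f = (\<Sum>P\<in>{P\<in>pats a b. c P}. f ((if P \<noteq> [] \<and> hd P then 1 else 0) + W (cw du dv) (M P a b)))"

lemma Kc_II: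
  assumes ab: "0 < a + b"
  shows "Kc cII a b du dv f = Nxy False False a b du dv f + Nxy False True a b du dv f"
proof -
  have eq: "{P\<in>pats a b. cII P} = {P\<in>pats a b. hd P = False \<and> last P = False} \<union> {P\<in>pats a b. hd P = False \<and> last P = True}"
    using pats_nonempty[OF _ ab] by (auto simp: cII_def)
  have "Kc cII a b du dv f = (\<Sum>P\<in>{P\<in>pats a b. hd P = False \<and> last P = False}. f ((if P \<noteq> [] \<and> hd P then 1 else 0) + W (cw du dv) (M P a b)))
     + (\<Sum>P\<in>{P\<in>pats a b. hd P = False \<and> last P = True}. f ((if P \<noteq> [] \<and> hd P then 1 else 0) + W (cw du dv) (M P a b)))"
    unfolding Kc_def eq by (rule sum.union_disjoint) (auto intro: finite_subset[OF _ finite_pats])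
  thus ?thesis unfolding Nxy_def by simp
qed

lemma Kc_I:
  assumes ab: "0 < a + b"
  shows "Kc cI a b du dv f = Nxy False False a b du dv f + Nxy True False a b du dv (\<lambda>w. f (Suc w))"
proof -
  have eq: "{P\<in>pats a b. cI P} = {P\<in>pats a b. hd P = False \<and> last P = False} \<union> {P\<in>pats a b. hd P = True \<and> last P = False}"
    using pats_nonempty[OF _ ab] by (auto simp: cI_def)
  have "Kc cI a b du dv f = (\<Sum>P\<in>{P\<in>pats a b. hd P = False \<and> last P = False}. f ((if P \<noteq> [] \<and> hd P then 1 else 0) + W (cw du dv) (M P a b)))
     + (\<Sum>P\<in>{P\<in>pats a b. hd P = True \<and> last P = False}. f ((if P \<noteq> [] \<and> hd P then 1 else 0) + W (cw du dv) (M P a b)))"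
    unfolding Kc_def eq by (rule sum.union_disjoint) (auto intro: finite_subset[OF _ finite_pats])
  also have "(\<Sum>P\<in>{P\<in>pats a b. hd P = True \<and> last P = False}. f ((if P \<noteq> [] \<and> hd P then 1 else 0) + W (cw du dv) (M P a b)))
     = (\<Sum>P\<in>{P\<in>pats a b. hd P = True \<and> last P = False}. f (Suc (W (cw du dv) (M P a b))))"
    by (rule sum.cong) (use pats_nonempty[OF _ ab] in auto)
  finally show ?thesis unfolding Nxy_def by simp
qed

lemma K1:
  assumes ab: "0 < a + b" and du: "length du = a - 1" and dv: "length dv = b - 1"
  shows "Kc cII a b du dv f = Kc cI a b du dv f"
proof -
  have "Nxy False True a b du dv f = Nxy True False a b (rev du) (rev dv) (\<lambda>w. f (Suc w))"
    by (rule Nxy_rev) (use ab du dv in auto)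
  also have "\<dots> = Nxy True False a b du dv (\<lambda>w. f (Suc w))"
    by (rule Nxy_count) (use ab du dv in auto)
  finally have "Nxy False False a b du dv f + Nxy False True a b du dv f =
     Nxy False False a b du dv f + Nxy True False a b du dv (\<lambda>w. f (Suc w))" by simp
  thus ?thesis unfolding Kc_I[OF ab] Kc_II[OF ab] .
qed

lemma K2:
  assumes ab: "0 < a + b" and du: "length du = a - 1" "length du' = a - 1"
    "count_list du True = count_list du' True"
    and dv: "length dv = b - 1" "length dv' = b - 1" "count_list dv True = count_list dv' True"
  shows "Kc cI a b du dv f = Kc cI a b du' dv' f"
proof -
  have "Nxy False False a b du dv f = Nxy False False a b du' dv' f" by (rule Nxy_count) (use assms in auto)
  moreover have "Nxy True False a b du dv (\<lambda>w. f (Suc w)) = Nxy True False a b du' dv' (\<lambda>w. f (Suc w))"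
    by (rule Nxy_count) (use assms in auto)
  ultimately show ?thesis unfolding Kc_I[OF ab] by simp
qed


lemma K1':
  assumes du: "length du = a - 1" and dv: "length dv = b - 1"
  shows "Kc cII a b du dv f = Kc cI a b du dv f"
proof (cases "0 < a + b")
  case True thus ?thesis by (rule K1[OF _ du dv])
next
  case False
  hence "a = 0" "b = 0" by auto
  hence "{P \<in> pats a b. cII P} = {P \<in> pats a b. cI P}" by (auto simp: pats_def cI_def cII_def)
  thus ?thesis unfolding Kc_def by simp
qed

lemma K2':
  assumes du: "length du = a - 1" "length du' = a - 1"
    "count_list du True = count_list du' True"
    and dv: "length dv = b - 1" "length dv' = b - 1" "count_list dv True = count_list dv' True"
  shows "Kc cI a b du dv f = Kc cI a b du' dv' f"
proof (cases "0 < a + b")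
  case True thus ?thesis by (rule K2[OF _ du dv])
next
  case False
  hence "a = 0" "b = 0" by auto
  hence "du = []" "du' = []" "dv = []" "dv' = []" using du dv by auto
  thus ?thesis by simp
qed

fun dl :: "nat list \<Rightarrow> bool list" where
  "dl (x # y # r) = (y < x) # dl (y # r)"
| "dl _ = []"

definition des :: "nat list \<Rightarrow> nat" where "des xs = W (\<lambda>x y. y < x) xs"

lemma dl_length: "length (dl u) = length u - 1"
  by (induction u rule: dl.induct) auto

lemma dl_count: "count_list (dl u) True = des u"
  unfolding des_def by (induction u rule: dl.induct) auto

lemma dl_nth: "Suc i < length u \<Longrightarrow> dl u ! i = (u ! Suc i < u ! i)"
proof (induction u arbitrary: i rule: dl.induct)
  case (1 x y r) thus ?case by (cases i) auto
qed auto

lemma dl_shift: "dl (map (\<lambda>x. x + c) v) = dl v"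
  by (induction v rule: dl.induct) auto

definition perm0 :: "nat \<Rightarrow> nat list set" where
  "perm0 n = {t. distinct t \<and> set t = {0..<n}}"

lemma perm0_length: "t \<in> perm0 n \<Longrightarrow> length t = n"
proof -
  assume "t \<in> perm0 n"
  hence "distinct t" "set t = {0..<n}" unfolding perm0_def by auto
  thus ?thesis using distinct_card[of t] by simp
qed

lemma des_mrg:
  assumes P: "P \<in> pats a b" and u: "length u = a" and v: "length v = b"
    and lt: "\<And>x y. x \<in> set u \<Longrightarrow> y \<in> set v \<Longrightarrow> x < y"
  shows "des (mrg P u v) = W (cw (dl u) (dl v)) (M P a b)"
proof -
  let ?h = "case_sum (\<lambda>i. u ! i) (\<lambda>j. v ! j)"
  have vv: "count_list P True = length (map Inl [0..<a] :: (nat + nat) list)"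
      "count_list P False = length (map Inr [0..<b] :: (nat + nat) list)" using M_valid[OF P] by auto
  have "map ?h (M P a b) = mrg P (map ?h (map Inl [0..<a])) (map ?h (map Inr [0..<b]))"
    unfolding M_def by (rule mrg_map[OF vv])
  also have "map ?h (map Inl [0..<a]) = u" using u map_nth[of u] by (simp add: comp_def)
  also have "map ?h (map Inr [0..<b]) = v" using v map_nth[of v] by (simp add: comp_def)
  finally have e: "mrg P u v = map ?h (M P a b)" by simp
  have "des (mrg P u v) = W (\<lambda>x y. ?h y < ?h x) (M P a b)" unfolding e des_def W_map ..
  also have "\<dots> = W (cw (dl u) (dl v)) (M P a b)"
  proof (rule W_cong_adj)
    fix x y assume xy: "(x, y) \<in> adj (M P a b)"
    have A: "x \<in> set (M P a b)" "y \<in> set (M P a b)" using adj_subset[OF xy] by auto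
    show "(?h y < ?h x) = cw (dl u) (dl v) x y"
    proof (cases x)
      case (Inl i)
      have ia: "i < a" using A(1) Inl M_set[OF P] by auto
      show ?thesis
      proof (cases y)
        case (Inl j)
        hence "j = Suc i \<and> j < a" using M_adj[OF P xy] \<open>x = Inl i\<close> by blast
        thus ?thesis using Inl \<open>x = Inl i\<close> u by (simp add: dl_nth)
      next
        case (Inr j)
        have "j < b" using A(2) Inr M_set[OF P] by auto
        hence "u ! i < v ! j" using lt ia u v by simp
        thus ?thesis using Inr \<open>x = Inl i\<close> by simp
      qed
    next
      case (Inr i)
      have ib: "i < b" using A(1) Inr M_set[OF P] by auto
      show ?thesis
      proof (cases y)
        case (Inr j)
        hence "j = Suc i \<and> j < b" using M_adj[OF P xy] \<open>x = Inr i\<close> by blast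
        thus ?thesis using Inr \<open>x = Inr i\<close> v by (simp add: dl_nth)
      next
        case (Inl j)
        have "j < a" using A(2) Inl M_set[OF P] by auto
        hence "u ! j < v ! i" using lt ib u v by simp
        thus ?thesis using Inl \<open>x = Inr i\<close> by simp
      qed
    qed
  qed
  finally show ?thesis .
qed


definition step :: "(bool list \<Rightarrow> bool) \<Rightarrow> nat list set \<Rightarrow> nat list set \<Rightarrow> nat \<Rightarrow> nat \<Rightarrow> nat list set" where
  "step c EL ER a b = (\<lambda>(u, v, P). a # mrg P u (map (\<lambda>x. x + Suc a) v)) ` (EL \<times> ER \<times> {P \<in> pats a b. c P})"

lemma shift_set: "set v = {0..<b} \<Longrightarrow> set (map (\<lambda>x. x + Suc a) v) = {Suc a..<Suc a + b}"
proof -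
  assume "set v = {0..<b}"
  hence "set (map (\<lambda>x. x + Suc a) v) = (\<lambda>x. x + Suc a) ` {0..<b}" by simp
  also have "\<dots> = {Suc a..<Suc a + b}"
  proof
    show "(\<lambda>x. x + Suc a) ` {0..<b} \<subseteq> {Suc a..<Suc a + b}" by auto
    show "{Suc a..<Suc a + b} \<subseteq> (\<lambda>x. x + Suc a) ` {0..<b}"
    proof
      fix x assume "x \<in> {Suc a..<Suc a + b}"
      hence "x = (x - Suc a) + Suc a" "x - Suc a \<in> {0..<b}" by auto
      thus "x \<in> (\<lambda>x. x + Suc a) ` {0..<b}" by (metis imageI)
    qed
  qed
  finally show ?thesis .
qed

lemma step_elem:
  assumes u: "u \<in> perm0 a" and v: "v \<in> perm0 b" and P: "P \<in> pats a b"
  shows "a # mrg P u (map (\<lambda>x. x + Suc a) v) \<in> perm0 (Suc (a + b))"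
proof -
  let ?v = "map (\<lambda>x. x + Suc a) v"
  have lu: "length u = a" and lv: "length ?v = b" using perm0_length[OF u] perm0_length[OF v] by auto
  have vv: "count_list P True = length u" "count_list P False = length ?v"
    using P lu lv count_TF[of P] by (auto simp: pats_def)
  have s: "set (a # mrg P u ?v) = {0..<Suc (a + b)}"
    using mrg_set[OF vv] u v shift_set[of v b a] by (auto simp: perm0_def)
  have l: "length (a # mrg P u ?v) = Suc (a + b)" using P by (simp add: mrg_length pats_def)
  have "card (set (a # mrg P u ?v)) = length (a # mrg P u ?v)" unfolding s l by simp
  hence "distinct (a # mrg P u ?v)" by (rule card_distinct)
  thus ?thesis using s by (simp add: perm0_def)
qed

lemma step_sub: "EL \<subseteq> perm0 a \<Longrightarrow> ER \<subseteq> perm0 b \<Longrightarrow> step c EL ER a b \<subseteq> perm0 (Suc (a + b))"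
proof (unfold step_def, rule image_subsetI, clarify)
  fix u v P assume "EL \<subseteq> perm0 a" "ER \<subseteq> perm0 b" "u \<in> EL" "v \<in> ER" "P \<in> pats a b"
  thus "a # mrg P u (map (\<lambda>x. x + Suc a) v) \<in> perm0 (Suc (a + b))" by (intro step_elem) auto
qed

lemma step_finite: "finite EL \<Longrightarrow> finite ER \<Longrightarrow> finite (step c EL ER a b)"
  unfolding step_def using finite_pats by auto

lemma step_inj:
  assumes "EL \<subseteq> perm0 a" "ER \<subseteq> perm0 b"
  shows "inj_on (\<lambda>(u, v, P). a # mrg P u (map (\<lambda>x. x + Suc a) v)) (EL \<times> ER \<times> {P \<in> pats a b. c P})"
proof (rule inj_onI)
  fix x y assume xS: "x \<in> EL \<times> ER \<times> {P \<in> pats a b. c P}" and yS: "y \<in> EL \<times> ER \<times> {P \<in> pats a b. c P}"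
    and fxy: "(\<lambda>(u, v, P). a # mrg P u (map (\<lambda>x. x + Suc a) v)) x = (\<lambda>(u, v, P). a # mrg P u (map (\<lambda>x. x + Suc a) v)) y"
  obtain u v P where x: "x = (u, v, P)" by (cases x) auto
  obtain u2 v2 P2 where y: "y = (u2, v2, P2)" by (cases y) auto
  have A: "u \<in> EL" "v \<in> ER" "P \<in> pats a b" "u2 \<in> EL" "v2 \<in> ER" "P2 \<in> pats a b"
    using xS yS x y by auto
  have eq: "mrg P u (map (\<lambda>x. x + Suc a) v) = mrg P2 u2 (map (\<lambda>x. x + Suc a) v2)"
    using fxy x y by simp
  have props: "filter (\<lambda>x. x < a) (mrg Q w (map (\<lambda>x. x + Suc a) z)) = w \<and>
      filter (\<lambda>x. \<not> x < a) (mrg Q w (map (\<lambda>x. x + Suc a) z)) = map (\<lambda>x. x + Suc a) z \<and>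
      map (\<lambda>x. x < a) (mrg Q w (map (\<lambda>x. x + Suc a) z)) = Q"
    if "w \<in> perm0 a" "z \<in> perm0 b" "Q \<in> pats a b" for w z Q
  proof -
    have lu: "length w = a" and lv: "length (map (\<lambda>x. x + Suc a) z) = b"
      using perm0_length that by auto
    have vv: "count_list Q True = length w" "count_list Q False = length (map (\<lambda>x. x + Suc a) z)"
      using that lu lv count_TF[of Q] by (auto simp: pats_def)
    have w1: "\<forall>x\<in>set w. x < a" and z1: "\<forall>y\<in>set (map (\<lambda>x. x + Suc a) z). \<not> y < a"
      using that by (auto simp: perm0_def)
    show ?thesis using filter_mrg[OF vv w1] filter_mrg2[OF vv, of "\<lambda>x. \<not> x < a"] w1 z1 map_mrg_pat[OF vv w1 z1]
      by auto
  qed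
  have p1: "u \<in> perm0 a" "v \<in> perm0 b" "u2 \<in> perm0 a" "v2 \<in> perm0 b" using A assms by auto
  have "u = u2" using props[OF p1(1,2) A(3)] props[OF p1(3,4) A(6)] eq by metis
  moreover have "P = P2" using props[OF p1(1,2) A(3)] props[OF p1(3,4) A(6)] eq by metis
  moreover have "map (\<lambda>x. x + Suc a) v = map (\<lambda>x. x + Suc a) v2"
    using props[OF p1(1,2) A(3)] props[OF p1(3,4) A(6)] eq by metis
  hence "v = v2" by (simp add: inj_map_eq_map inj_on_def)
  ultimately show "x = y" using x y by simp
qed

lemma step_sum:
  assumes "finite EL" "finite ER" "EL \<subseteq> perm0 a" "ER \<subseteq> perm0 b"
  shows "(\<Sum>t\<in>step c EL ER a b. h t) =
    (\<Sum>u\<in>EL. \<Sum>v\<in>ER. \<Sum>P\<in>{P \<in> pats a b. c P}. h (a # mrg P u (map (\<lambda>x. x + Suc a) v)))"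
proof -
  have "(\<Sum>t\<in>step c EL ER a b. h t) =
      (\<Sum>(u, v, P)\<in>EL \<times> ER \<times> {P \<in> pats a b. c P}. h (a # mrg P u (map (\<lambda>x. x + Suc a) v)))"
    unfolding step_def by (subst sum.reindex[OF step_inj[OF assms(3,4)]]) (simp add: case_prod_unfold)
  also have "\<dots> = (\<Sum>u\<in>EL. \<Sum>(v, P)\<in>ER \<times> {P \<in> pats a b. c P}. h (a # mrg P u (map (\<lambda>x. x + Suc a) v)))"
    by (subst sum.cartesian_product[symmetric]) (simp add: case_prod_unfold)
  also have "\<dots> = (\<Sum>u\<in>EL. \<Sum>v\<in>ER. \<Sum>P\<in>{P \<in> pats a b. c P}. h (a # mrg P u (map (\<lambda>x. x + Suc a) v)))"
    by (subst sum.cartesian_product[symmetric]) (simp add: case_prod_unfold)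
  finally show ?thesis .
qed

lemma des_step:
  assumes u: "u \<in> perm0 a" and v: "v \<in> perm0 b" and P: "P \<in> pats a b"
  shows "des (a # mrg P u (map (\<lambda>x. x + Suc a) v)) = (if P \<noteq> [] \<and> hd P then 1 else 0) + W (cw (dl u) (dl v)) (M P a b)"
proof -
  let ?v = "map (\<lambda>x. x + Suc a) v"
  have lu: "length u = a" and lv: "length ?v = b" using perm0_length[OF u] perm0_length[OF v] by auto
  have vv: "count_list P True = length u" "count_list P False = length ?v"
    using P lu lv count_TF[of P] by (auto simp: pats_def)
  have lt: "x < y" if "x \<in> set u" "y \<in> set ?v" for x y using that u v by (auto simp: perm0_def)
  have d: "des (mrg P u ?v) = W (cw (dl u) (dl v)) (M P a b)"
    using des_mrg[OF P lu lv lt] dl_shift[of "Suc a" v] by simp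
  have h: "(mrg P u ?v \<noteq> [] \<and> hd (mrg P u ?v) < a) = (P \<noteq> [] \<and> hd P)"
  proof (cases "P = []")
    case True thus ?thesis by simp
  next
    case False
    have ne: "mrg P u ?v \<noteq> []" using False by (simp add: mrg_length flip: length_greater_0_conv)
    show ?thesis
    proof (cases "hd P")
      case True
      hence "u \<noteq> []" using vv False by (cases P) auto
      hence "hd u < a" using u by (auto simp: perm0_def)
      thus ?thesis using False True ne by (simp add: hd_mrg)
    next
      case hF: False
      hence "?v \<noteq> []" using vv False by (cases P) auto
      hence "hd ?v \<ge> a" using v by (cases v) (auto simp: perm0_def)
      thus ?thesis using False hF ne by (simp add: hd_mrg)
    qed
  qed
  show ?thesis unfolding des_def using d h by (simp add: W_Cons des_def)
qed

lemma step_des_sum: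
  assumes "finite EL" "finite ER" "EL \<subseteq> perm0 a" "ER \<subseteq> perm0 b"
  shows "(\<Sum>t\<in>step c EL ER a b. f (des t)) = (\<Sum>u\<in>EL. \<Sum>v\<in>ER. Kc c a b (dl u) (dl v) f)"
  unfolding step_sum[OF assms] Kc_def
proof (intro sum.cong refl)
  fix u v P assume A: "u \<in> EL" "v \<in> ER" "P \<in> {P \<in> pats a b. c P}"
  have "u \<in> perm0 a" "v \<in> perm0 b" "P \<in> pats a b" using A assms by auto
  thus "f (des (a # mrg P u (map (\<lambda>x. x + Suc a) v))) = f ((if P \<noteq> [] \<and> hd P then 1 else 0) + W (cw (dl u) (dl v)) (M P a b))"
    by (simp only: des_step)
qed


fun ExtC :: "(bool list \<Rightarrow> bool) \<Rightarrow> unit tree \<Rightarrow> nat list set" where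
  "ExtC c Leaf = {[]}"
| "ExtC c (Node L x R) = step c (ExtC c L) (ExtC c R) (size L) (size R)"

fun ExtS :: "unit tree \<Rightarrow> nat list set" where
  "ExtS Leaf = {[]}"
| "ExtS (Node L x R) = step cI (ExtC cII L) (ExtS R) (size L) (size R)"

lemma ExtC_props: "ExtC c T \<subseteq> perm0 (size T) \<and> finite (ExtC c T)"
proof (induction T)
  case Leaf thus ?case by (simp add: perm0_def)
next
  case (Node L x R)
  thus ?case using step_sub[of "ExtC c L" "size L" "ExtC c R" "size R" c] step_finite by simp
qed

lemma ExtS_props: "ExtS T \<subseteq> perm0 (size T) \<and> finite (ExtS T)"
proof (induction T)
  case Leaf thus ?case by (simp add: perm0_def)
next
  case (Node L x R)
  thus ?case using step_sub[of "ExtC cII L" "size L" "ExtS R" "size R" cI] step_finite ExtC_props[of cII L] by simp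
qed

definition canon :: "nat \<Rightarrow> nat \<Rightarrow> bool list" where
  "canon n d = replicate d True @ replicate (n - d) False"

lemma count_rep_T: "count_list (replicate d True) True = d" by (induction d) auto

lemma canon_props: "d \<le> n \<Longrightarrow> length (canon n d) = n \<and> count_list (canon n d) True = d"
  unfolding canon_def by (simp add: count_rep_T count_rep_F)

definition G :: "nat \<Rightarrow> nat \<Rightarrow> nat \<Rightarrow> nat \<Rightarrow> (nat \<Rightarrow> 'b::comm_monoid_add) \<Rightarrow> 'b" where
  "G a b d1 d2 f = Kc cI a b (canon (a - 1) d1) (canon (b - 1) d2) f"

lemma des_le: "des u \<le> length u - 1"
  using dl_count[of u] dl_length[of u] count_le_length[of "dl u" True] by simp

lemma Kc_G:
  assumes u: "u \<in> perm0 a" and v: "v \<in> perm0 b"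
  shows "Kc cI a b (dl u) (dl v) f = G a b (des u) (des v) f"
    "Kc cII a b (dl u) (dl v) f = G a b (des u) (des v) f"
proof -
  have lu: "length u = a" "length v = b" using perm0_length u v by auto
  have c1: "length (canon (a - 1) (des u)) = a - 1 \<and> count_list (canon (a - 1) (des u)) True = des u"
    by (rule canon_props) (use des_le[of u] lu in simp)
  have c2: "length (canon (b - 1) (des v)) = b - 1 \<and> count_list (canon (b - 1) (des v)) True = des v"
    by (rule canon_props) (use des_le[of v] lu in simp)
  show e: "Kc cI a b (dl u) (dl v) f = G a b (des u) (des v) f" unfolding G_def
    by (rule K2') (use c1 c2 lu dl_length dl_count in auto)
  show "Kc cII a b (dl u) (dl v) f = G a b (des u) (des v) f"
    using K1'[of "dl u" a "dl v" b f] e lu dl_length by simp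
qed

lemma partB:
  "(\<forall>f::nat \<Rightarrow> 'b::comm_monoid_add. (\<Sum>t\<in>ExtC cI T. f (des t)) = (\<Sum>t\<in>ExtC cII T. f (des t)) \<and>
      (\<Sum>t\<in>ExtS T. f (des t)) = (\<Sum>t\<in>ExtC cII T. f (des t)))"
proof (induction T)
  case Leaf thus ?case by simp
next
  case (Node L x R)
  let ?a = "size L" and ?b = "size R"
  show ?case
  proof
    fix f :: "nat \<Rightarrow> 'b"
    have pI: "ExtC cI L \<subseteq> perm0 ?a" "finite (ExtC cI L)" "ExtC cI R \<subseteq> perm0 ?b" "finite (ExtC cI R)"
      using ExtC_props by auto
    have pII: "ExtC cII L \<subseteq> perm0 ?a" "finite (ExtC cII L)" "ExtC cII R \<subseteq> perm0 ?b" "finite (ExtC cII R)"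
      using ExtC_props by auto
    have pS: "ExtS R \<subseteq> perm0 ?b" "finite (ExtS R)" using ExtS_props by auto
    have eI: "(\<Sum>t\<in>ExtC cI (Node L x R). f (des t)) = (\<Sum>u\<in>ExtC cI L. \<Sum>v\<in>ExtC cI R. G ?a ?b (des u) (des v) f)"
    proof -
      have "(\<Sum>t\<in>ExtC cI (Node L x R). f (des t)) = (\<Sum>u\<in>ExtC cI L. \<Sum>v\<in>ExtC cI R. Kc cI ?a ?b (dl u) (dl v) f)"
        using step_des_sum[OF pI(2) pI(4) pI(1) pI(3)] by simp
      also have "\<dots> = (\<Sum>u\<in>ExtC cI L. \<Sum>v\<in>ExtC cI R. G ?a ?b (des u) (des v) f)"
        by (intro sum.cong refl) (use Kc_G pI pI in blast)
      finally show ?thesis .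
    qed
    have eII: "(\<Sum>t\<in>ExtC cII (Node L x R). f (des t)) = (\<Sum>u\<in>ExtC cII L. \<Sum>v\<in>ExtC cII R. G ?a ?b (des u) (des v) f)"
    proof -
      have "(\<Sum>t\<in>ExtC cII (Node L x R). f (des t)) = (\<Sum>u\<in>ExtC cII L. \<Sum>v\<in>ExtC cII R. Kc cII ?a ?b (dl u) (dl v) f)"
        using step_des_sum[OF pII(2) pII(4) pII(1) pII(3)] by simp
      also have "\<dots> = (\<Sum>u\<in>ExtC cII L. \<Sum>v\<in>ExtC cII R. G ?a ?b (des u) (des v) f)"
        by (intro sum.cong refl) (use Kc_G pII pII in blast)
      finally show ?thesis .
    qed
    have eS: "(\<Sum>t\<in>ExtS (Node L x R). f (des t)) = (\<Sum>u\<in>ExtC cII L. \<Sum>v\<in>ExtS R. G ?a ?b (des u) (des v) f)"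
    proof -
      have "(\<Sum>t\<in>ExtS (Node L x R). f (des t)) = (\<Sum>u\<in>ExtC cII L. \<Sum>v\<in>ExtS R. Kc cI ?a ?b (dl u) (dl v) f)"
        using step_des_sum[OF pII(2) pS(2) pII(1) pS(1)] by simp
      also have "\<dots> = (\<Sum>u\<in>ExtC cII L. \<Sum>v\<in>ExtS R. G ?a ?b (des u) (des v) f)"
        by (intro sum.cong refl) (use Kc_G pII pS in blast)
      finally show ?thesis .
    qed
    have inner: "(\<Sum>v\<in>ExtC cI R. G ?a ?b d (des v) f) = (\<Sum>v\<in>ExtC cII R. G ?a ?b d (des v) f)"
       "(\<Sum>v\<in>ExtS R. G ?a ?b d (des v) f) = (\<Sum>v\<in>ExtC cII R. G ?a ?b d (des v) f)" for d
      using Node.IH(2) by auto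
    have outer: "(\<Sum>u\<in>ExtC cI L. (\<lambda>d. \<Sum>v\<in>ExtC cII R. G ?a ?b d (des v) f) (des u)) =
        (\<Sum>u\<in>ExtC cII L. (\<lambda>d. \<Sum>v\<in>ExtC cII R. G ?a ?b d (des v) f) (des u))"
      using spec[OF Node.IH(1), of "\<lambda>d. \<Sum>v\<in>ExtC cII R. G ?a ?b d (des v) f"] by (rule conjunct1)
    show "(\<Sum>t\<in>ExtC cI (Node L x R). f (des t)) = (\<Sum>t\<in>ExtC cII (Node L x R). f (des t)) \<and>
      (\<Sum>t\<in>ExtS (Node L x R). f (des t)) = (\<Sum>t\<in>ExtC cII (Node L x R). f (des t))"
      unfolding eI eII eS inner using outer by simp
  qed
qed


fun idx :: "nat list \<Rightarrow> nat \<Rightarrow> nat" where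
  "idx [] x = 0"
| "idx (y # ys) x = (if y = x then 0 else Suc (idx ys x))"

lemma idx_props: "x \<in> set xs \<Longrightarrow> idx xs x < length xs \<and> xs ! idx xs x = x \<and> (\<forall>j < idx xs x. xs ! j \<noteq> x)"
proof (induction xs)
  case Nil thus ?case by simp
next
  case (Cons y ys)
  show ?case
  proof (cases "y = x")
    case True thus ?thesis by simp
  next
    case False
    hence "x \<in> set ys" using Cons by simp
    thus ?thesis using Cons False by (auto simp: less_Suc_eq_0_disj)
  qed
qed

lemma pos_idx: "x \<in> set xs \<Longrightarrow> pos xs x = idx xs x"
  unfolding pos_def
proof (rule Least_equality)
  assume "x \<in> set xs"
  thus "idx xs x < length xs \<and> xs ! idx xs x = x" using idx_props by blast
  fix y assume "y < length xs \<and> xs ! y = x"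
  thus "idx xs x \<le> y" using idx_props[OF \<open>x \<in> set xs\<close>] by (metis not_le)
qed

lemma idx_app: "idx (xs @ ys) x = (if x \<in> set xs then idx xs x else length xs + idx ys x)"
  by (induction xs) auto

lemma pos_nth: "distinct xs \<Longrightarrow> i < length xs \<Longrightarrow> pos xs (xs ! i) = i"
proof -
  assume d: "distinct xs" and i: "i < length xs"
  hence m: "xs ! i \<in> set xs" by simp
  have "xs ! idx xs (xs ! i) = xs ! i" "idx xs (xs ! i) < length xs" using idx_props[OF m] by auto
  hence "idx xs (xs ! i) = i" using d i nth_eq_iff_index_eq by blast
  thus ?thesis using pos_idx[OF m] by simp
qed

lemma nth_pos: "x \<in> set xs \<Longrightarrow> xs ! pos xs x = x"
  using pos_idx idx_props by metis

lemma pos_lt: "x \<in> set xs \<Longrightarrow> pos xs x < length xs"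
  using pos_idx idx_props by metis

lemma pos_split:
  assumes d: "distinct (l @ m # r)"
  shows "x \<in> set l \<Longrightarrow> pos (l @ m # r) x = pos l x"
    "pos (l @ m # r) m = length l"
    "x \<in> set r \<Longrightarrow> pos (l @ m # r) x = pos r x + Suc (length l)"
proof -
  show "x \<in> set l \<Longrightarrow> pos (l @ m # r) x = pos l x" by (simp add: pos_idx idx_app)
  show "pos (l @ m # r) m = length l" using d by (simp add: pos_idx idx_app)
  show "x \<in> set r \<Longrightarrow> pos (l @ m # r) x = pos r x + Suc (length l)"
  proof -
    assume xr: "x \<in> set r"
    have "x \<notin> set l" "x \<noteq> m" using d xr by auto
    thus ?thesis using xr by (simp add: pos_idx idx_app)
  qed
qed

definition iw :: "nat list \<Rightarrow> nat list" where
  "iw w = map (pos w) (sort w)"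

lemma map_as_mrg: "map f zs = mrg (map p zs) (map f (filter p zs)) (map f (filter (\<lambda>x. \<not> p x) zs))"
  by (induction zs) auto

lemma count_map_filter: "count_list (map p zs) True = length (filter p zs)"
  by (induction zs) auto

lemma sort_split:
  assumes d: "distinct (l @ m # r)" and lt: "\<forall>x\<in>set l \<union> set r. m < x"
  shows "sort (l @ m # r) = m # sort (l @ r)"
proof -
  have "sort (l @ m # r) = sorted_list_of_set (set (l @ m # r))"
    by (simp only: sorted_list_of_set_sort_remdups distinct_remdups_id[OF d])
  also have "\<dots> = Min (set (l @ m # r)) # sorted_list_of_set (set (l @ m # r) - {Min (set (l @ m # r))})"
    by (rule sorted_list_of_set_nonempty) auto
  also have "Min (set (l @ m # r)) = m" using lt by (intro Min_eqI) (auto intro: less_imp_le)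
  also have "set (l @ m # r) - {m} = set (l @ r)" using d by auto
  also have "sorted_list_of_set (set (l @ r)) = sort (l @ r)"
  proof -
    have "distinct (l @ r)" using d by auto
    thus ?thesis by (simp only: sorted_list_of_set_sort_remdups distinct_remdups_id)
  qed
  finally show ?thesis .
qed

definition patt :: "nat list \<Rightarrow> nat list \<Rightarrow> bool list" where
  "patt l r = map (\<lambda>x. x \<in> set l) (sort (l @ r))"

lemma iw_split:
  assumes d: "distinct (l @ m # r)" and lt: "\<forall>x\<in>set l \<union> set r. m < x"
  shows "iw (l @ m # r) = length l # mrg (patt l r) (iw l) (map (\<lambda>x. x + Suc (length l)) (iw r))"
proof -
  let ?w = "l @ m # r" and ?p = "\<lambda>x. x \<in> set l"
  have fl: "filter ?p (sort (l @ r)) = sort l"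
  proof -
    have "filter ?p (l @ r) = l" using d by (auto intro: filter_True filter_False)
    thus ?thesis by (simp add: filter_sort)
  qed
  have fr: "filter (\<lambda>x. \<not> ?p x) (sort (l @ r)) = sort r"
  proof -
    have "filter (\<lambda>x. \<not> ?p x) (l @ r) = r" using d by (auto intro: filter_True filter_False)
    thus ?thesis by (simp add: filter_sort)
  qed
  have "iw ?w = pos ?w m # map (pos ?w) (sort (l @ r))"
    unfolding iw_def using sort_split[OF d lt] by simp
  also have "pos ?w m = length l" using pos_split(2)[OF d] .
  also have "map (pos ?w) (sort (l @ r)) = mrg (patt l r) (map (pos ?w) (sort l)) (map (pos ?w) (sort r))"
    unfolding patt_def using map_as_mrg[of "pos ?w" "sort (l @ r)" ?p] fl fr by simp
  also have "map (pos ?w) (sort l) = iw l" unfolding iw_def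
    by (rule map_cong) (auto simp: pos_split(1)[OF d])
  also have "map (pos ?w) (sort r) = map (\<lambda>x. x + Suc (length l)) (iw r)" unfolding iw_def
    by (simp add: pos_split(3)[OF d])
  finally show ?thesis .
qed

lemma patt_pats: "distinct (l @ r) \<Longrightarrow> patt l r \<in> pats (length l) (length r)"
proof -
  assume d: "distinct (l @ r)"
  have "filter (\<lambda>x. x \<in> set l) (l @ r) = l" using d by (auto intro: filter_True filter_False)
  hence "count_list (patt l r) True = length l" unfolding patt_def count_map_filter
    by (simp add: filter_sort)
  thus ?thesis unfolding pats_def patt_def by simp
qed


lemma wsplit: "w \<noteq> [] \<Longrightarrow> w = wleft w @ Min (set w) # wright w"
proof -
  assume ne: "w \<noteq> []"
  let ?m = "Min (set w)"
  have dne: "dropWhile (\<lambda>x. x \<noteq> ?m) w \<noteq> []" using dw_ne[OF ne] .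
  have "hd (dropWhile (\<lambda>x. x \<noteq> ?m) w) = ?m" using hd_dropWhile[OF dne] by simp
  hence "dropWhile (\<lambda>x. x \<noteq> ?m) w = ?m # wright w" unfolding wright_def using dne by (cases "dropWhile (\<lambda>x. x \<noteq> ?m) w") auto
  thus ?thesis unfolding wleft_def by (metis takeWhile_dropWhile_id)
qed

lemma wlen: "w \<noteq> [] \<Longrightarrow> length w = length (wleft w) + Suc (length (wright w))"
  by (subst wsplit, assumption, simp)

lemma wsplit_lt:
  assumes d: "distinct w" and ne: "w \<noteq> []"
  shows "\<forall>x\<in>set (wleft w) \<union> set (wright w). Min (set w) < x"
proof -
  have d2: "distinct (wleft w @ Min (set w) # wright w)" using d wsplit[OF ne] by metis
  have "\<forall>x\<in>set w. Min (set w) \<le> x" by simp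
  hence "\<forall>x\<in>set (wleft w) \<union> set (wright w). Min (set w) \<le> x" using wsplit[OF ne] by (metis UnE set_ConsD set_append Un_iff list.set_intros(2))
  moreover have "Min (set w) \<notin> set (wleft w) \<union> set (wright w)" using d2 by auto
  ultimately show ?thesis using order_le_neq_trans by blast
qed

lemma wlr:
  assumes d: "distinct (l @ m # r)" and lt: "\<forall>x\<in>set l \<union> set r. m < x"
  shows "wleft (l @ m # r) = l" "wright (l @ m # r) = r" "Min (set (l @ m # r)) = m"
proof -
  show mm: "Min (set (l @ m # r)) = m" using lt by (intro Min_eqI) (auto intro: less_imp_le)
  have nl: "m \<notin> set l" using d by auto
  have nl2: "\<forall>x\<in>set l. x \<noteq> m" using nl by auto
  have tw: "takeWhile (\<lambda>x. x \<noteq> m) (l @ m # r) = l"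
    using nl2 by (simp add: takeWhile_append)
  have dw: "dropWhile (\<lambda>x. x \<noteq> m) (l @ m # r) = m # r"
    using nl2 by (simp add: dropWhile_append)
  show "wleft (l @ m # r) = l" unfolding wleft_def mm using tw by simp
  show "wright (l @ m # r) = r" unfolding wright_def mm using dw by simp
qed

lemma shape_Psi_Nil: "shape (Psi []) = Leaf"
  by (simp add: Psi.simps shape_def)

lemma shape_Psi_Cons: "w \<noteq> [] \<Longrightarrow> shape (Psi w) = Node (shape (Psi (wleft w))) () (shape (Psi (wright w)))"
  by (subst Psi.simps) (simp add: shape_def)

lemma shape_Psi_size: "size (shape (Psi w)) = length w"
proof (induction w rule: Psi.induct)
  case (1 w)
  show ?case
  proof (cases "w = []")
    case True thus ?thesis by (simp add: shape_Psi_Nil)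
  next
    case False
    thus ?thesis using 1 wlen[OF False] by (simp add: shape_Psi_Cons)
  qed
qed

lemma shape_Psi_Leaf: "shape (Psi w) = Leaf \<longleftrightarrow> w = []"
  using shape_Psi_size[of w] by (cases w) (auto simp: shape_Psi_Nil)

lemma andreI_split:
  assumes d: "distinct (l @ m # r)" and lt: "\<forall>x\<in>set l \<union> set r. m < x"
  shows "andreI (l @ m # r) = (andreI l \<and> andreI r \<and> (l @ r \<noteq> [] \<longrightarrow> Max (set (l @ r)) \<in> set r))"
proof (cases "length (l @ m # r) \<le> 1")
  case True
  hence "l = []" "r = []" by auto
  thus ?thesis by (simp add: andreI.simps)
next
  case False
  thus ?thesis by (subst andreI.simps) (simp add: wlr[OF d lt])
qed

lemma andreII_split:
  assumes d: "distinct (l @ m # r)" and lt: "\<forall>x\<in>set l \<union> set r. m < x"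
  shows "andreII (l @ m # r) = (andreII l \<and> andreII r \<and> (l @ r \<noteq> [] \<longrightarrow> Min (set (l @ r)) \<in> set r))"
proof (cases "length (l @ m # r) \<le> 1")
  case True
  hence "l = []" "r = []" by auto
  thus ?thesis by (simp add: andreII.simps)
next
  case False
  thus ?thesis by (subst andreII.simps) (simp add: wlr[OF d lt])
qed

lemma last_sort: "xs \<noteq> [] \<Longrightarrow> last (sort xs) = Max (set xs)"
proof -
  assume ne: "xs \<noteq> []"
  let ?z = "sort xs"
  have s: "sorted ?z" and zs: "set ?z = set xs" and zne: "?z \<noteq> []" using ne by (auto, metis length_sort length_0_conv)
  show ?thesis
  proof (rule Max_eqI[symmetric])
    show "finite (set xs)" by simp
    show "last ?z \<in> set xs" using zne zs last_in_set by metis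
    fix y assume "y \<in> set xs"
    then obtain i where i: "i < length ?z" "y = ?z ! i" using zs by (metis in_set_conv_nth)
    have "?z ! i \<le> ?z ! (length ?z - 1)" using s i by (intro sorted_nth_mono) auto
    thus "y \<le> last ?z" using i zne by (simp add: last_conv_nth)
  qed
qed

lemma hd_sort: "xs \<noteq> [] \<Longrightarrow> hd (sort xs) = Min (set xs)"
proof -
  assume ne: "xs \<noteq> []"
  let ?z = "sort xs"
  have s: "sorted ?z" and zs: "set ?z = set xs" and zne: "?z \<noteq> []" using ne by (auto, metis length_sort length_0_conv)
  show ?thesis
  proof (rule Min_eqI[symmetric])
    show "finite (set xs)" by simp
    show "hd ?z \<in> set xs" using zne zs hd_in_set by metis
    fix y assume "y \<in> set xs"
    then obtain i where i: "i < length ?z" "y = ?z ! i" using zs by (metis in_set_conv_nth)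
    have "?z ! 0 \<le> ?z ! i" using s i by (intro sorted_nth_mono) auto
    thus "hd ?z \<le> y" using i zne by (simp add: hd_conv_nth)
  qed
qed

lemma cI_patt:
  assumes d: "distinct (l @ r)"
  shows "cI (patt l r) = (l @ r \<noteq> [] \<longrightarrow> Max (set (l @ r)) \<in> set r)"
proof (cases "l @ r = []")
  case True thus ?thesis by (simp add: cI_def patt_def)
next
  case False
  have "Max (set (l @ r)) \<in> set (l @ r)" using False by (intro Max_in) auto
  hence "(Max (set (l @ r)) \<in> set r) = (Max (set (l @ r)) \<notin> set l)" using d by auto
  moreover have "sort (l @ r) \<noteq> []" using False by (metis length_sort length_0_conv)
  ultimately show ?thesis using False by (simp add: cI_def patt_def last_map last_sort)
qed

lemma cII_patt:
  assumes d: "distinct (l @ r)"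
  shows "cII (patt l r) = (l @ r \<noteq> [] \<longrightarrow> Min (set (l @ r)) \<in> set r)"
proof (cases "l @ r = []")
  case True thus ?thesis by (simp add: cII_def patt_def)
next
  case False
  have "Min (set (l @ r)) \<in> set (l @ r)" using False by (intro Min_in) auto
  hence "(Min (set (l @ r)) \<in> set r) = (Min (set (l @ r)) \<notin> set l)" using d by auto
  moreover have "sort (l @ r) \<noteq> []" using False by (metis length_sort length_0_conv)
  ultimately show ?thesis using False by (simp add: cII_def patt_def hd_map hd_sort)
qed


fun nd :: "nat list \<Rightarrow> bool" where
  "nd (x # y # z # r) = (\<not> (y < x \<and> z < y) \<and> nd (y # z # r))"
| "nd _ = True"

definition ed :: "nat list \<Rightarrow> bool" where
  "ed zs = (2 \<le> length zs \<and> last zs < last (butlast zs))"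

lemma ed_simps[simp]: "ed [] = False" "ed [a] = False" "ed [a, b] = (b < a)"
  by (auto simp: ed_def)

lemma ed_Cons: "2 \<le> length ys \<Longrightarrow> ed (x # ys) = ed ys"
  by (cases ys) (auto simp: ed_def)

lemma nd_Cons_small: "\<forall>y\<in>set ys. m < y \<Longrightarrow> nd (m # ys) = nd ys"
  by (cases ys rule: nd.cases) auto

lemma nd_split: "\<forall>x\<in>set xs \<union> set ys. m < x \<Longrightarrow> nd (xs @ m # ys) = (nd xs \<and> nd ys \<and> \<not> ed xs)"
proof (induction xs)
  case Nil thus ?case using nd_Cons_small by simp
next
  case (Cons x xs)
  show ?case
  proof (cases xs)
    case Nil
    show ?thesis
    proof (cases ys)
      case Nil thus ?thesis using \<open>xs = []\<close> by simp
    next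
      case (Cons y ys')
      have "nd (m # ys) = nd ys" using nd_Cons_small Cons.prems by simp
      thus ?thesis using \<open>xs = []\<close> Cons Cons.prems by auto
    qed
  next
    case (Cons x2 xs')
    have IH: "nd (xs @ m # ys) = (nd xs \<and> nd ys \<and> \<not> ed xs)" using Cons.IH Cons.prems by simp
    show ?thesis
    proof (cases xs')
      case Nil
      have "m < x2" using Cons.prems \<open>xs = x2 # xs'\<close> by simp
      thus ?thesis using IH \<open>xs = x2 # xs'\<close> Nil by auto
    next
      case (Cons x3 xs'')
      have "ed (x # xs) = ed xs" using \<open>xs = x2 # xs'\<close> Cons by (intro ed_Cons) simp
      thus ?thesis using IH \<open>xs = x2 # xs'\<close> Cons by auto
    qed
  qed
qed

lemma ed_split: "\<forall>x\<in>set xs \<union> set ys. m < x \<Longrightarrow> ed (xs @ m # ys) = ((ys = [] \<and> xs \<noteq> []) \<or> ed ys)"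
proof -
  assume lt: "\<forall>x\<in>set xs \<union> set ys. m < x"
  show ?thesis
  proof (cases ys)
    case Nil
    show ?thesis
    proof (cases "xs = []")
      case True thus ?thesis using Nil by simp
    next
      case False
      hence "m < last xs" using lt by simp
      moreover have "1 \<le> length xs" using False by (cases xs) auto
      ultimately show ?thesis using Nil False by (simp add: ed_def)
    qed
  next
    case (Cons y ys')
    show ?thesis
    proof (cases ys')
      case Nil
      have "y > m" using lt Cons by simp
      thus ?thesis using Cons Nil by (simp add: ed_def butlast_append)
    next
      case (Cons z zs)
      thus ?thesis using \<open>ys = y # ys'\<close> by (simp add: ed_def butlast_append)
    qed
  qed
qed

lemma filter_all_gt: fixes xs :: "nat list" shows "\<forall>x\<in>set xs. m < x \<Longrightarrow> \<not> m \<le> k \<Longrightarrow> filter (\<lambda>x. x \<le> k) xs = []"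
  by (induction xs) auto

lemma filter_split:
  fixes l r :: "nat list"
  assumes "\<forall>x\<in>set l \<union> set r. m < x"
  shows "filter (\<lambda>x. x \<le> k) (l @ m # r) =
    (if m \<le> k then filter (\<lambda>x. x \<le> k) l @ m # filter (\<lambda>x. x \<le> k) r else [])"
proof (cases "m \<le> k")
  case True thus ?thesis by simp
next
  case False
  thus ?thesis using False assms filter_all_gt[of l m k] filter_all_gt[of r m k] by simp
qed

definition QQ :: "nat list \<Rightarrow> bool" where
  "QQ w = (\<forall>k. nd (filter (\<lambda>x. x \<le> k) w) \<and> \<not> ed (filter (\<lambda>x. x \<le> k) w))"

definition SS :: "nat list \<Rightarrow> bool" where
  "SS w = ((w \<noteq> [] \<longrightarrow> last w = Max (set w)) \<and> (\<forall>k. nd (filter (\<lambda>x. x \<le> k) w)))"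

lemma QQ_split:
  assumes lt: "\<forall>x\<in>set l \<union> set r. m < x"
  shows "QQ (l @ m # r) = (QQ l \<and> QQ r \<and> (\<forall>k. \<not> (filter (\<lambda>x. x \<le> k) r = [] \<and> filter (\<lambda>x. x \<le> k) l \<noteq> [])))"
proof -
  have pk: "(nd (filter (\<lambda>x. x \<le> k) (l @ m # r)) \<and> \<not> ed (filter (\<lambda>x. x \<le> k) (l @ m # r))) =
    ((nd (filter (\<lambda>x. x \<le> k) l) \<and> \<not> ed (filter (\<lambda>x. x \<le> k) l)) \<and>
     (nd (filter (\<lambda>x. x \<le> k) r) \<and> \<not> ed (filter (\<lambda>x. x \<le> k) r)) \<and>
     \<not> (filter (\<lambda>x. x \<le> k) r = [] \<and> filter (\<lambda>x. x \<le> k) l \<noteq> []))" for k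
  proof (cases "m \<le> k")
    case True
    have lt2: "\<forall>x\<in>set (filter (\<lambda>x. x \<le> k) l) \<union> set (filter (\<lambda>x. x \<le> k) r). m < x" using lt by auto
    show ?thesis unfolding filter_split[OF lt] using True nd_split[OF lt2] ed_split[OF lt2] by auto
  next
    case False
    have "filter (\<lambda>x. x \<le> k) l = []" "filter (\<lambda>x. x \<le> k) r = []" using lt False filter_all_gt[of l m k] filter_all_gt[of r m k] by auto
    thus ?thesis unfolding filter_split[OF lt] using False by simp
  qed
  show ?thesis unfolding QQ_def pk by blast
qed

lemma cond_min:
  assumes d: "distinct (l @ r)"
  shows "(\<forall>k. \<not> (filter (\<lambda>x. x \<le> k) r = [] \<and> filter (\<lambda>x. x \<le> k) l \<noteq> [])) =
         (l @ r \<noteq> [] \<longrightarrow> Min (set (l @ r)) \<in> set r)"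
proof
  assume A: "\<forall>k. \<not> (filter (\<lambda>x. x \<le> k) r = [] \<and> filter (\<lambda>x. x \<le> k) l \<noteq> [])"
  show "l @ r \<noteq> [] \<longrightarrow> Min (set (l @ r)) \<in> set r"
  proof
    assume ne: "l @ r \<noteq> []"
    let ?mu = "Min (set (l @ r))"
    have mu: "?mu \<in> set l \<union> set r" using ne Min_in[of "set (l @ r)"] by auto
    show "?mu \<in> set r"
    proof (rule ccontr)
      assume nr: "?mu \<notin> set r"
      hence ml: "?mu \<in> set l" using mu by auto
      hence "filter (\<lambda>x. x \<le> ?mu) l \<noteq> []" by (auto simp: filter_empty_conv)
      hence "filter (\<lambda>x. x \<le> ?mu) r \<noteq> []" using A by blast
      then obtain y where y: "y \<in> set r" "y \<le> ?mu" by (auto simp: filter_empty_conv)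
      have "?mu \<le> y" using y by simp
      hence "y = ?mu" using y(2) by (intro antisym)
      thus False using y nr by simp
    qed
  qed
next
  assume B: "l @ r \<noteq> [] \<longrightarrow> Min (set (l @ r)) \<in> set r"
  show "\<forall>k. \<not> (filter (\<lambda>x. x \<le> k) r = [] \<and> filter (\<lambda>x. x \<le> k) l \<noteq> [])"
  proof (intro allI notI, elim conjE)
    fix k assume fr: "filter (\<lambda>x. x \<le> k) r = []" and fl: "filter (\<lambda>x. x \<le> k) l \<noteq> []"
    then obtain x where x: "x \<in> set l" "x \<le> k" by (auto simp: filter_empty_conv)
    let ?mu = "Min (set (l @ r))"
    have "?mu \<in> set r" using B x by auto
    moreover have "?mu \<le> x" using x by simp
    hence "?mu \<le> k" using x(2) by (rule order_trans)
    ultimately show False using fr by (auto simp: filter_empty_conv)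
  qed
qed

lemma QQ_andreII: "distinct w \<Longrightarrow> QQ w = andreII w"
proof (induction w rule: Psi.induct)
  case (1 w)
  show ?case
  proof (cases "w = []")
    case True thus ?thesis by (simp add: QQ_def andreII.simps)
  next
    case False
    let ?l = "wleft w" and ?r = "wright w" and ?m = "Min (set w)"
    have w: "w = ?l @ ?m # ?r" using wsplit[OF False] .
    have d: "distinct (?l @ ?m # ?r)" using 1(3) w by metis
    have lt: "\<forall>x\<in>set ?l \<union> set ?r. ?m < x" using wsplit_lt[OF 1(3) False] .
    have IH: "QQ ?l = andreII ?l" "QQ ?r = andreII ?r" using 1 False d by auto
    have "QQ w = QQ (?l @ ?m # ?r)" using w by simp
    also have "\<dots> = (QQ ?l \<and> QQ ?r \<and> (?l @ ?r \<noteq> [] \<longrightarrow> Min (set (?l @ ?r)) \<in> set ?r))"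
      using QQ_split[OF lt] cond_min[of ?l ?r] d by simp
    also have "\<dots> = andreII (?l @ ?m # ?r)" using andreII_split[OF d lt] IH by simp
    finally show ?thesis using w by simp
  qed
qed

lemma SS_split:
  assumes d: "distinct (l @ m # r)" and lt: "\<forall>x\<in>set l \<union> set r. m < x"
  shows "SS (l @ m # r) = (QQ l \<and> SS r \<and> (l @ r \<noteq> [] \<longrightarrow> Max (set (l @ r)) \<in> set r))"
proof -
  have pk: "nd (filter (\<lambda>x. x \<le> k) (l @ m # r)) =
    ((nd (filter (\<lambda>x. x \<le> k) l) \<and> \<not> ed (filter (\<lambda>x. x \<le> k) l)) \<and> nd (filter (\<lambda>x. x \<le> k) r))" for k
  proof (cases "m \<le> k")
    case True
    have lt2: "\<forall>x\<in>set (filter (\<lambda>x. x \<le> k) l) \<union> set (filter (\<lambda>x. x \<le> k) r). m < x" using lt by auto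
    show ?thesis unfolding filter_split[OF lt] using True nd_split[OF lt2] by auto
  next
    case False
    have "filter (\<lambda>x. x \<le> k) l = []" "filter (\<lambda>x. x \<le> k) r = []" using lt False filter_all_gt[of l m k] filter_all_gt[of r m k] by auto
    thus ?thesis unfolding filter_split[OF lt] using False by simp
  qed
  have allk: "(\<forall>k. nd (filter (\<lambda>x. x \<le> k) (l @ m # r))) = (QQ l \<and> (\<forall>k. nd (filter (\<lambda>x. x \<le> k) r)))"
    unfolding pk QQ_def by blast
  have lastc: "(last (l @ m # r) = Max (set (l @ m # r))) =
      ((r \<noteq> [] \<longrightarrow> last r = Max (set r)) \<and> (l @ r \<noteq> [] \<longrightarrow> Max (set (l @ r)) \<in> set r))"
  proof (cases "r = []")
    case True
    show ?thesis
    proof (cases "l = []")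
      case True thus ?thesis using \<open>r = []\<close> by simp
    next
      case False
      have "Max (set (l @ [m])) \<in> set l"
      proof -
        have "Max (set l) \<in> set l" using False by simp
        moreover have "Max (set (l @ [m])) = max (Max (set l)) m" using False by (simp add: Max_insert)
        moreover have "m < Max (set l)" using lt \<open>Max (set l) \<in> set l\<close> by blast
        ultimately show ?thesis by (simp add: max_def)
      qed
      hence "Max (set (l @ [m])) \<noteq> m" using d by auto
      thus ?thesis using True False by simp
    qed
  next
    case False
    let ?M = "Max (set (l @ r))"
    have ne: "l @ r \<noteq> []" using False by simp
    have Mx: "Max (set (l @ m # r)) = ?M"
    proof -
      have "set (l @ m # r) = insert m (set (l @ r))" by auto
      hence "Max (set (l @ m # r)) = max m ?M" using ne by (simp add: Max_insert)
      moreover have "m < ?M"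
      proof -
        have "?M \<in> set (l @ r)" using ne by (intro Max_in) auto
        thus ?thesis using lt by auto
      qed
      ultimately show ?thesis by simp
    qed
    have "(last r = ?M) = (last r = Max (set r) \<and> ?M \<in> set r)"
    proof
      assume e: "last r = ?M"
      hence Mr: "?M \<in> set r" using False last_in_set by metis
      have "Max (set r) \<le> ?M" using False by (intro Max_mono) auto
      moreover have "?M \<le> Max (set r)" using Mr by simp
      ultimately show "last r = Max (set r) \<and> ?M \<in> set r" using e Mr by simp
    next
      assume e: "last r = Max (set r) \<and> ?M \<in> set r"
      have "Max (set r) \<le> ?M" using False by (intro Max_mono) auto
      moreover have "?M \<le> Max (set r)" using e by simp
      ultimately show "last r = ?M" using e by simp
    qed
    thus ?thesis using False Mx ne by simp
  qed
  show ?thesis unfolding SS_def allk lastc by auto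
qed

lemma ex_nat_split: "(\<exists>i::nat. P i) = (P 0 \<or> (\<exists>j. P (Suc j)))"
  by (metis not0_implies_Suc)

lemma ndd_Cons: "no_double_descent (x # y # z # r) = (\<not> (y < x \<and> z < y) \<and> no_double_descent (y # z # r))"
  unfolding no_double_descent_def by (subst ex_nat_split) auto

lemma ndd_nd: "no_double_descent w = nd w"
proof (induction w rule: nd.induct)
  case (1 x y z r) thus ?case by (simp add: ndd_Cons)
qed (auto simp: no_double_descent_def)


definition Xset :: "(nat list \<Rightarrow> bool) \<Rightarrow> nat set \<Rightarrow> unit tree \<Rightarrow> nat list set" where
  "Xset X V T = {w. distinct w \<and> set w = V \<and> X w \<and> shape (Psi w) = T}"

lemma len_filter_zip: "length ws = length P \<Longrightarrow> length (filter snd (zip ws P)) = count_list P True"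
  by (induction ws P rule: list_induct2) auto

lemma zipsel_mem:
  assumes d: "distinct ws" and l: "length ws = length P" and j: "j < length ws"
  shows "(ws ! j \<in> set (map fst (filter snd (zip ws P)))) = P ! j"
proof
  assume "ws ! j \<in> set (map fst (filter snd (zip ws P)))"
  then obtain i where i: "i < length ws" "P ! i" "ws ! i = ws ! j" using l by (auto simp: set_zip)
  hence "i = j" using d j nth_eq_iff_index_eq by blast
  thus "P ! j" using i by simp
next
  assume "P ! j"
  thus "ws ! j \<in> set (map fst (filter snd (zip ws P)))" using j l by (force simp: set_zip)
qed

lemma zipsel_map:
  assumes d: "distinct ws" and l: "length ws = length P"
  shows "map (\<lambda>x. x \<in> set (map fst (filter snd (zip ws P)))) ws = P"
  by (rule nth_equalityI) (use l zipsel_mem[OF d l] in auto)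

lemma zipsel_card:
  assumes d: "distinct ws" and l: "length ws = length P"
  shows "card (set (map fst (filter snd (zip ws P)))) = count_list P True"
proof -
  have "distinct (map fst (zip ws P))" using d l by simp
  hence "distinct (map fst (filter snd (zip ws P)))" by (rule distinct_map_filter)
  hence "card (set (map fst (filter snd (zip ws P)))) = length (map fst (filter snd (zip ws P)))"
    by (rule distinct_card)
  thus ?thesis using len_filter_zip[OF l] by simp
qed

lemma zipsel_sub: "set (map fst (filter snd (zip ws P))) \<subseteq> set ws"
  by (auto dest: set_zip_leftD)

lemma partA_step:
  fixes XL XR :: "nat list \<Rightarrow> bool" and x :: unit
  assumes HL: "\<And>A. finite A \<Longrightarrow> card A = size L \<Longrightarrow> iw ` Xset XL A L = EL"
    and HR: "\<And>B. finite B \<Longrightarrow> card B = size R \<Longrightarrow> iw ` Xset XR B R = ER"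
    and Hdec: "\<And>l m r. distinct (l @ m # r) \<Longrightarrow> \<forall>x\<in>set l \<union> set r. m < x \<Longrightarrow>
        XR (l @ m # r) = (XL l \<and> XR r \<and> c (patt l r))"
    and V: "finite V" "card V = size (Node L x R)"
  shows "iw ` Xset XR V (Node L x R) = step c EL ER (size L) (size R)"
proof
  show "iw ` Xset XR V (Node L x R) \<subseteq> step c EL ER (size L) (size R)"
  proof
    fix t assume "t \<in> iw ` Xset XR V (Node L x R)"
    then obtain w where w: "w \<in> Xset XR V (Node L x R)" "t = iw w" by blast
    have dw: "distinct w" and sw: "set w = V" and Xw: "XR w" and shw: "shape (Psi w) = Node L x R"
      using w by (auto simp: Xset_def)
    have ne: "w \<noteq> []" using shw shape_Psi_Leaf[of w] by auto
    define l where "l = wleft w"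
    define r where "r = wright w"
    define m where "m = Min (set w)"
    have ws: "w = l @ m # r" using wsplit[OF ne] by (simp add: l_def r_def m_def)
    have d: "distinct (l @ m # r)" using dw unfolding ws .
    have lt: "\<forall>x\<in>set l \<union> set r. m < x" using wsplit_lt[OF dw ne] by (simp add: l_def r_def m_def)
    have sh: "shape (Psi l) = L" "shape (Psi r) = R" using shw shape_Psi_Cons[OF ne] by (auto simp: l_def r_def)
    have X3: "XL l" "XR r" "c (patt l r)" using Hdec[OF d lt] Xw unfolding ws by auto
    have lenl: "length l = size L" using sh(1) shape_Psi_size[of l] by simp
    have lenr: "length r = size R" using sh(2) shape_Psi_size[of r] by simp
    have cl: "card (set l) = size L" using d lenl by (simp add: distinct_card)
    have cr: "card (set r) = size R" using d lenr by (simp add: distinct_card)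
    have il: "iw l \<in> EL" using HL[OF _ cl] d X3 sh by (auto simp: Xset_def)
    have ir: "iw r \<in> ER" using HR[OF _ cr] d X3 sh by (auto simp: Xset_def)
    have pp: "patt l r \<in> pats (size L) (size R)"
      using patt_pats[of l r] d lenl lenr by simp
    have "t = size L # mrg (patt l r) (iw l) (map (\<lambda>x. x + Suc (size L)) (iw r))"
      using iw_split[OF d lt] lenl unfolding w(2) ws by simp
    thus "t \<in> step c EL ER (size L) (size R)" unfolding step_def
      using il ir pp X3 by (intro image_eqI[where x = "(iw l, iw r, patt l r)"]) auto
  qed
next
  show "step c EL ER (size L) (size R) \<subseteq> iw ` Xset XR V (Node L x R)"
  proof
    fix t assume "t \<in> step c EL ER (size L) (size R)"
    then obtain u v P where t: "t = size L # mrg P u (map (\<lambda>x. x + Suc (size L)) v)"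
      and u: "u \<in> EL" and v: "v \<in> ER" and P: "P \<in> pats (size L) (size R)" and cP: "c P"
      unfolding step_def by auto
    let ?a = "size L" and ?b = "size R"
    have Vne: "V \<noteq> {}" using V by auto
    define m where "m = Min V"
    define W' where "W' = V - {m}"
    have mV: "m \<in> V" using Vne V by (simp add: m_def)
    have cW: "card W' = ?a + ?b" using V mV by (simp add: W'_def)
    have fW: "finite W'" using V by (simp add: W'_def)
    define ws where "ws = sorted_list_of_set W'"
    have dws: "distinct ws" and sws: "set ws = W'" and lws: "length ws = ?a + ?b"
      using fW cW by (auto simp: ws_def)
    have lP: "length P = ?a + ?b" "count_list P True = ?a" using P by (auto simp: pats_def)
    define A where "A = set (map fst (filter snd (zip ws P)))"
    define B where "B = W' - A"
    have AW: "A \<subseteq> W'" using zipsel_sub[of ws P] sws by (simp add: A_def)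
    have cA: "card A = ?a" using zipsel_card[OF dws] lws lP by (simp add: A_def)
    have fA: "finite A" using AW fW finite_subset by blast
    have fB: "finite B" using fW by (simp add: B_def)
    have cB: "card B = ?b" using card_Diff_subset[OF fA AW] cW cA by (simp add: B_def)
    obtain l where l: "l \<in> Xset XL A L" "u = iw l" using HL[OF fA cA] u by blast
    obtain r where r: "r \<in> Xset XR B R" "v = iw r" using HR[OF fB cB] v by blast
    have dl: "distinct l" "set l = A" "XL l" "shape (Psi l) = L" using l by (auto simp: Xset_def)
    have dr: "distinct r" "set r = B" "XR r" "shape (Psi r) = R" using r by (auto simp: Xset_def)
    have lenl: "length l = ?a" using dl(4) shape_Psi_size[of l] by simp
    have mlt: "m < y" if "y \<in> W'" for y
    proof -
      have "m \<le> y" using that V by (simp add: m_def W'_def)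
      moreover have "y \<noteq> m" using that by (simp add: W'_def)
      ultimately show ?thesis by simp
    qed
    have d: "distinct (l @ m # r)" using dl dr AW by (auto simp: B_def W'_def)
    have lt: "\<forall>x\<in>set l \<union> set r. m < x" using dl dr AW mlt by (auto simp: B_def)
    have sV: "set (l @ m # r) = V" using dl dr AW mV by (auto simp: B_def W'_def)
    have srt: "sort (l @ r) = ws"
    proof -
      have "distinct (l @ r)" using d by simp
      hence "sort (l @ r) = sorted_list_of_set (set (l @ r))"
        by (simp only: sorted_list_of_set_sort_remdups distinct_remdups_id)
      also have "set (l @ r) = W'" using dl dr AW by (auto simp: B_def)
      finally show ?thesis by (simp add: ws_def)
    qed
    have pt: "patt l r = P" unfolding patt_def srt dl(2) A_def using zipsel_map[OF dws] lws lP by simp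
    have XRs: "XR (l @ m # r)" using Hdec[OF d lt] dl dr pt cP by simp
    have shs: "shape (Psi (l @ m # r)) = Node L x R"
      using shape_Psi_Cons[of "l @ m # r"] wlr[OF d lt] dl dr by simp
    have "iw (l @ m # r) = t" using iw_split[OF d lt] t l(2) r(2) lenl pt by simp
    moreover have "l @ m # r \<in> Xset XR V (Node L x R)" using d sV XRs shs by (simp add: Xset_def)
    ultimately show "t \<in> iw ` Xset XR V (Node L x R)" by blast
  qed
qed



lemma partA_leaf: "X [] \<Longrightarrow> finite V \<Longrightarrow> card V = size (Leaf :: unit tree) \<Longrightarrow> iw ` Xset X V Leaf = {[]}"
proof -
  assume X: "X []" and "finite V" "card V = size (Leaf :: unit tree)"
  hence V: "V = {}" by simp
  have "Xset X V Leaf = {[]}"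
  proof
    show "Xset X V Leaf \<subseteq> {[]}" using shape_Psi_Leaf by (auto simp: Xset_def)
    show "{[]} \<subseteq> Xset X V Leaf" using V X by (simp add: Xset_def shape_Psi_Nil)
  qed
  thus ?thesis by (simp add: iw_def)
qed

lemma partA_C:
  assumes X0: "X []"
    and Hdec: "\<And>l m r. distinct (l @ m # r) \<Longrightarrow> \<forall>x\<in>set l \<union> set r. m < x \<Longrightarrow>
        X (l @ m # r) = (X l \<and> X r \<and> c (patt l r))"
  shows "finite V \<Longrightarrow> card V = size T \<Longrightarrow> iw ` Xset X V T = ExtC c T"
proof (induction T arbitrary: V)
  case Leaf thus ?case using partA_leaf[of X, OF X0] by simp
next
  case (Node L x R)
  have "iw ` Xset X V (Node L x R) = step c (ExtC c L) (ExtC c R) (size L) (size R)"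
    by (rule partA_step[OF Node.IH(1) Node.IH(2) Hdec Node.prems(1) Node.prems(2)])
  thus ?case by simp
qed

lemma Hdec_I:
  assumes d: "distinct (l @ m # r)" and lt: "\<forall>x\<in>set l \<union> set r. m < x"
  shows "andreI (l @ m # r) = (andreI l \<and> andreI r \<and> cI (patt l r))"
proof -
  have "distinct (l @ r)" using d by simp
  thus ?thesis using andreI_split[OF d lt] cI_patt by simp
qed

lemma Hdec_II:
  assumes d: "distinct (l @ m # r)" and lt: "\<forall>x\<in>set l \<union> set r. m < x"
  shows "andreII (l @ m # r) = (andreII l \<and> andreII r \<and> cII (patt l r))"
proof -
  have "distinct (l @ r)" using d by simp
  thus ?thesis using andreII_split[OF d lt] cII_patt by simp
qed

lemma Hdec_S:
  assumes d: "distinct (l @ m # r)" and lt: "\<forall>x\<in>set l \<union> set r. m < x"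
  shows "SS (l @ m # r) = (andreII l \<and> SS r \<and> cI (patt l r))"
proof -
  have "distinct (l @ r)" "distinct l" using d by auto
  thus ?thesis using SS_split[OF d lt] cI_patt QQ_andreII by simp
qed

lemma partA_I: "finite V \<Longrightarrow> card V = size T \<Longrightarrow> iw ` Xset andreI V T = ExtC cI T"
  using partA_C[of andreI cI V T] Hdec_I by (simp add: andreI.simps)

lemma partA_II: "finite V \<Longrightarrow> card V = size T \<Longrightarrow> iw ` Xset andreII V T = ExtC cII T"
  using partA_C[of andreII cII V T] Hdec_II by (simp add: andreII.simps)

lemma partA_S: "finite V \<Longrightarrow> card V = size T \<Longrightarrow> iw ` Xset SS V T = ExtS T"
proof (induction T arbitrary: V)
  case Leaf
  have "SS []" by (simp add: SS_def)
  thus ?case using partA_leaf[of SS V] Leaf by simp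
next
  case (Node L x R)
  have "iw ` Xset SS V (Node L x R) = step cI (ExtC cII L) (ExtS R) (size L) (size R)"
    by (rule partA_step[OF partA_II Node.IH(2) Hdec_S Node.prems(1) Node.prems(2)])
  thus ?case by simp
qed


lemma sort_distinct_set: "distinct w \<Longrightarrow> sort w = sorted_list_of_set (set w)"
  by (simp only: sorted_list_of_set_sort_remdups distinct_remdups_id)

lemma iw_inj:
  assumes d1: "distinct w1" and d2: "distinct w2" and s: "set w1 = set w2" and e: "iw w1 = iw w2"
  shows "w1 = w2"
proof -
  have srt: "sort w1 = sort w2" using sort_distinct_set[OF d1] sort_distinct_set[OF d2] s by simp
  have pe: "\<forall>x\<in>set w1. pos w1 x = pos w2 x"
  proof -
    have "map (pos w1) (sort w1) = map (pos w2) (sort w1)" using e srt by (simp add: iw_def)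
    thus ?thesis by (simp add: map_eq_conv)
  qed
  have len: "length w1 = length w2" using d1 d2 s by (metis distinct_card)
  show ?thesis
  proof (rule nth_equalityI)
    show "length w1 = length w2" by (rule len)
    fix i assume i: "i < length w1"
    let ?x = "w1 ! i"
    have xm: "?x \<in> set w1" using i by simp
    have "pos w1 ?x = i" using pos_nth[OF d1 i] .
    hence "pos w2 ?x = i" using pe xm by simp
    moreover have "w2 ! pos w2 ?x = ?x" using nth_pos xm s by metis
    ultimately show "w1 ! i = w2 ! i" by simp
  qed
qed

lemma iw_inj_on: "inj_on iw (Xset X V T)"
  by (rule inj_onI) (auto simp: Xset_def intro: iw_inj)

lemma des_map_upt: "des (map f [a..<Suc (a + k)]) = card {i. a \<le> i \<and> i < a + k \<and> f (Suc i) < f i}"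
proof (induction k arbitrary: a)
  case 0 thus ?case by (simp add: des_def)
next
  case (Suc k)
  have u: "[a..<Suc (a + Suc k)] = a # [Suc a..<Suc (Suc a + k)]" by (simp add: upt_rec)
  have IH: "des (map f [Suc a..<Suc (Suc a + k)]) = card {i. Suc a \<le> i \<and> i < Suc a + k \<and> f (Suc i) < f i}"
    using Suc.IH[of "Suc a"] .
  have d: "des (map f [a..<Suc (a + Suc k)]) = (if f (Suc a) < f a then 1 else 0) + des (map f [Suc a..<Suc (Suc a + k)])"
    unfolding u des_def by (simp add: W_Cons upt_rec)
  have S: "{i. a \<le> i \<and> i < a + Suc k \<and> f (Suc i) < f i} =
      (if f (Suc a) < f a then {a} else {}) \<union> {i. Suc a \<le> i \<and> i < Suc a + k \<and> f (Suc i) < f i}"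
    apply (rule set_eqI)
    apply (case_tac "x = a")
     apply auto
    done
  have "card {i. a \<le> i \<and> i < a + Suc k \<and> f (Suc i) < f i} =
      (if f (Suc a) < f a then 1 else 0) + card {i. Suc a \<le> i \<and> i < Suc a + k \<and> f (Suc i) < f i}"
    unfolding S by (subst card_Un_disjoint) auto
  thus ?case using d IH by simp
qed

lemma ides_des:
  assumes w: "w \<in> perms n" and n: "n \<ge> 1"
  shows "ides n w = des (iw w)"
proof -
  have d: "distinct w" and s: "set w = {1..n}" using w by (auto simp: perms_def)
  have "{1..n} = {1..<Suc n}" by auto
  hence "sort w = [1..<Suc n]" using sort_distinct_set[OF d] s by (simp only: sorted_list_of_set_range)
  hence "iw w = map (pos w) [1..<Suc (1 + (n - 1))]" using n by (simp add: iw_def)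
  hence "des (iw w) = card {i. 1 \<le> i \<and> i < 1 + (n - 1) \<and> pos w (Suc i) < pos w i}"
    using des_map_upt[of "pos w" 1 "n - 1"] by (simp only:)
  also have "{i. 1 \<le> i \<and> i < 1 + (n - 1) \<and> pos w (Suc i) < pos w i} = {i \<in> {1..<n}. pos w (i + 1) < pos w i}"
    using n by auto
  finally show ?thesis by (simp add: ides_def)
qed

lemma AndI_X: "AndI n T = Xset andreI {1..n} T"
  by (auto simp: AndI_def Xset_def perms_def)

lemma AndII_X: "AndII n T = Xset andreII {1..n} T"
  by (auto simp: AndII_def Xset_def perms_def)

lemma simsun_SS:
  assumes w: "w \<in> perms n" and n: "n \<ge> 1"
  shows "simsun n w = SS w"
proof -
  have d: "distinct w" and s: "set w = {1..n}" using w by (auto simp: perms_def)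
  have len: "length w = n" using d s by (metis card_atLeastAtMost diff_Suc_1 distinct_card)
  have ne: "w \<noteq> []" using len n by auto
  have l: "w ! (n - 1) = last w" using len ne by (simp add: last_conv_nth)
  have mx: "Max (set w) = n" unfolding s using n by (intro Max_eqI) auto
  have k: "(\<forall>k\<in>{1..n}. no_double_descent (filter (\<lambda>x. x \<le> k) w)) = (\<forall>k. nd (filter (\<lambda>x. x \<le> k) w))"
  proof
    assume A: "\<forall>k\<in>{1..n}. no_double_descent (filter (\<lambda>x. x \<le> k) w)"
    show "\<forall>k. nd (filter (\<lambda>x. x \<le> k) w)"
    proof
      fix k
      show "nd (filter (\<lambda>x. x \<le> k) w)"
      proof (cases "k = 0")
        case True
        hence "filter (\<lambda>x. x \<le> k) w = []" using s by (auto simp: filter_empty_conv)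
        thus ?thesis by simp
      next
        case False
        have "filter (\<lambda>x. x \<le> k) w = filter (\<lambda>x. x \<le> min k n) w" using s by (intro filter_cong) auto
        moreover have "min k n \<in> {1..n}" using False n by auto
        ultimately show ?thesis using A ndd_nd by metis
      qed
    qed
  next
    assume "\<forall>k. nd (filter (\<lambda>x. x \<le> k) w)"
    thus "\<forall>k\<in>{1..n}. no_double_descent (filter (\<lambda>x. x \<le> k) w)" by (simp add: ndd_nd)
  qed
  show ?thesis unfolding simsun_def SS_def using w l mx k ne by auto
qed

lemma RS_X: "n \<ge> 1 \<Longrightarrow> RS n T = Xset SS {1..n} T"
  using simsun_SS by (auto simp: RS_def Xset_def perms_def)

lemma sum_conv:
  fixes s :: "'a :: comm_semiring_1"
  assumes n: "n \<ge> 1" and e: "iw ` Xset X {1..n} T = E"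
  shows "(\<Sum>\<sigma>\<in>Xset X {1..n} T. s ^ ides n \<sigma>) = (\<Sum>t\<in>E. s ^ des t)"
proof -
  have "(\<Sum>\<sigma>\<in>Xset X {1..n} T. s ^ ides n \<sigma>) = (\<Sum>\<sigma>\<in>Xset X {1..n} T. s ^ des (iw \<sigma>))"
    by (rule sum.cong) (auto simp: Xset_def perms_def intro!: arg_cong[where f = "\<lambda>d. s ^ d"] ides_des n)
  also have "\<dots> = (\<Sum>t\<in>iw ` Xset X {1..n} T. s ^ des t)"
    by (subst sum.reindex[OF iw_inj_on]) (simp add: comp_def)
  finally show ?thesis using e by simp
qed

theorem theorem2p5:
  fixes n :: nat and T :: "unit tree" and s :: "'a :: comm_semiring_1"
  assumes "n \<ge> 1" and "T \<in> URL n"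
  shows "(\<Sum>\<sigma>\<in>AndI n T. s ^ ides n \<sigma>) = (\<Sum>\<sigma>\<in>AndII n T. s ^ ides n \<sigma>) \<and>
         (\<Sum>\<sigma>\<in>AndII n T. s ^ ides n \<sigma>) = (\<Sum>\<sigma>\<in>RS n T. s ^ ides n \<sigma>)"
proof -
  have sz: "card {1..n} = size T" using assms(2) by (simp add: URL_def)
  have fin: "finite {1..n::nat}" by simp
  have eI: "(\<Sum>\<sigma>\<in>AndI n T. s ^ ides n \<sigma>) = (\<Sum>t\<in>ExtC cI T. s ^ des t)"
    unfolding AndI_X by (rule sum_conv[OF assms(1) partA_I[OF fin sz]])
  have eII: "(\<Sum>\<sigma>\<in>AndII n T. s ^ ides n \<sigma>) = (\<Sum>t\<in>ExtC cII T. s ^ des t)"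
    unfolding AndII_X by (rule sum_conv[OF assms(1) partA_II[OF fin sz]])
  have eS: "(\<Sum>\<sigma>\<in>RS n T. s ^ ides n \<sigma>) = (\<Sum>t\<in>ExtS T. s ^ des t)"
    unfolding RS_X[OF assms(1)] by (rule sum_conv[OF assms(1) partA_S[OF fin sz]])
  have B: "(\<Sum>t\<in>ExtC cI T. s ^ des t) = (\<Sum>t\<in>ExtC cII T. s ^ des t) \<and>
      (\<Sum>t\<in>ExtS T. s ^ des t) = (\<Sum>t\<in>ExtC cII T. s ^ des t)"
    using partB[of T] by blast
  show ?thesis using eI eII eS B by simp
qed


end
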